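(* Let $\mathfrak g$ be of type $A_2$, $\lambda,\mu\in P^+$, and let $\mathbf s\in\mathbb Z_+^3$ with $\mathbf s\notin\mathcal S^{A}_{\lambda,\mu}$. Then there exist finitely many $\mathbf s'\in\mathbb Z_+^3$ with $\mathbf s'\prec\mathbf s$ and elements $c_{\mathbf s'}\in\mathbf U(\mathfrak n^-\otimes1)$ such that in $\mathcal F_{\lambda,\mu}$ $$\Big(X_{\mathbf s}+\sum_{\mathbf s'\prec\mathbf s}c_{\mathbf s'}X_{\mathbf s'}\Big)v=0.$$
   Context: $\mathfrak g$ is the simple Lie algebra of type $A_2$ with Cartan subalgebra $\mathfrak h$, simple roots $\alpha_1,\alpha_2$, coroots $h_1,h_2$, positive roots $R^+$ written $(r_1,r_2)$ for $r_1\alpha_1+r_2\alpha_2$ (namely $(1,0),(0,1),(1,1)$), coroots $h_\alpha$, Chevalley basis $\{x^\pm_\alpha,h_i\}$, $\mathfrak n^\pm=\mathrm{span}\{x^\pm_\alpha\}$, dominant weights $P^+$; $m_i=\lambda(h_i)$, $n_i=\mu(h_i)$; $x^{(s)}=x^s/s!$. $\mathcal F_{\lambda,\mu}$ is the cyclic $\mathbf U(\mathfrak g\otimes\mathbb C[t])$-module generated by $v\ne0$ with relations $(\mathfrak n^+\otimes\mathbb C[t])v=0$; $(h\otimes t^r)v=\delta_{r,0}(\lambda+\mu)(h)v$ ($h\in\mathfrak h$); and for $\alpha\in R^+$: $(x^-_\alpha\otimes1)^{(\lambda+\mu)(h_\alpha)+1}v=0$, $(x^-_\alpha\otimes t)^{\min\{\lambda(h_\alpha),\mu(h_\alpha)\}+1}v=0$,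 $(x^-_\alpha\otimes t^r)v=0$ for $r\ge2$. $X_{(a,b,c)}=(x^-_{(1,0)}\otimes t)^{(a)}(x^-_{(1,1)}\otimes t)^{(b)}(x^-_{(0,1)}\otimes t)^{(c)}$. $\mathcal S^{A}_{\lambda,\mu}=\{(a,b,c)\in\mathbb Z_+^3: a\le\min\{m_1,n_1\},\ c\le\min\{m_2,n_2\},\ a+b+c\le\min\{m_1+m_2,n_1+n_2\},\ 2a+b\le m_1+n_1,\ 2c+b\le m_2+n_2\}$. Total order on $\mathbb Z_+^3$: $(a,b,c)\succ(a',b',c')$ iff $c<c'$, or $c=c'$ and $a<a'$, or $c=c'$, $a=a'$ and $b<b'$. *)

theory Defs
  imports "HOL-Analysis.Analysis"
begin

type_synonym mat3 = "complex^3^3"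

definition Emat :: "3 \<Rightarrow> 3 \<Rightarrow> mat3" where
  "Emat i j = (\<chi> k l. if k = i \<and> l = j then 1 else 0)"

definition lie_br :: "mat3 \<Rightarrow> mat3 \<Rightarrow> mat3" where
  "lie_br A B = A ** B - B ** A"

datatype proot = R10 | R01 | R11

fun xplus :: "proot \<Rightarrow> mat3" where
  "xplus R10 = Emat 1 2" | "xplus R01 = Emat 2 3" | "xplus R11 = Emat 1 3"
fun xminus :: "proot \<Rightarrow> mat3" where
  "xminus R10 = Emat 2 1" | "xminus R01 = Emat 3 2" | "xminus R11 = Emat 3 1"

definition h1 :: mat3 where "h1 = Emat 1 1 - Emat 2 2"
definition h2 :: mat3 where "h2 = Emat 2 2 - Emat 3 3"

text \<open>A dominant weight lambda is given by (m1,m2) = (lambda(h1), lambda(h2));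
  value lambda(h_alpha) on the coroot of a positive root.\<close>
fun wt_on :: "nat \<times> nat \<Rightarrow> proot \<Rightarrow> nat" where
  "wt_on (m1, m2) R10 = m1" | "wt_on (m1, m2) R01 = m2" | "wt_on (m1, m2) R11 = m1 + m2"

section \<open>Free associative algebra over C on letters (A, r) = A \<otimes> t^r\<close>

type_synonym letter = "mat3 \<times> nat"
type_synonym ncpoly = "letter list \<Rightarrow> complex"

definition finsupp :: "ncpoly \<Rightarrow> bool" where
  "finsupp p \<longleftrightarrow> finite {w. p w \<noteq> 0}"

definition ncmul :: "ncpoly \<Rightarrow> ncpoly \<Rightarrow> ncpoly" where
  "ncmul p q w = (\<Sum>i\<le>length w. p (take i w) * q (drop i w))"

definition ncword :: "letter list \<Rightarrow> ncpoly" where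
  "ncword u = (\<lambda>w. if w = u then 1 else 0)"

definition ncscale :: "complex \<Rightarrow> ncpoly \<Rightarrow> ncpoly" where
  "ncscale c p = (\<lambda>w. c * p w)"

definition ncadd :: "ncpoly \<Rightarrow> ncpoly \<Rightarrow> ncpoly" where
  "ncadd p q = (\<lambda>w. p w + q w)"

definition ncsub :: "ncpoly \<Rightarrow> ncpoly \<Rightarrow> ncpoly" where
  "ncsub p q = (\<lambda>w. p w - q w)"

text \<open>Defining relations of U(gl3 \<otimes> C[t]) (linearity in the matrix, bracket relation),
  together with the relations (I \<otimes> t^r) = 0 which cut gl3 \<otimes> C[t] down to
  sl3 \<otimes> C[t]; the quotient of the free algebra by these is U(sl3 \<otimes> C[t]).\<close>
inductive_set env_rels :: "ncpoly set" where
  lin_add: "ncsub (ncword [(A + B, r)]) (ncadd (ncword [(A, r)]) (ncword [(B, r)])) \<in> env_rels"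
| lin_scale: "ncsub (ncword [(c *\<^sub>R A, r)]) (ncscale (complex_of_real c) (ncword [(A, r)])) \<in> env_rels"
| lin_cscale: "ncsub (ncword [((\<chi> i j. c * A $ i $ j), r)]) (ncscale c (ncword [(A, r)])) \<in> env_rels"
| center: "ncword [(mat 1, r)] \<in> env_rels"
| bracket: "ncsub (ncsub (ncword [(A, r), (B, s)]) (ncword [(B, s), (A, r)]))
              (ncword [(lie_br A B, r + s)]) \<in> env_rels"

text \<open>Defining relations of the cyclic module F_{lambda,mu} (as elements y with y v = 0).
  The divided powers are replaced by ordinary powers (they differ by a nonzero scalar).\<close>
inductive_set F_rels :: "nat \<times> nat \<Rightarrow> nat \<times> nat \<Rightarrow> ncpoly set" for lam mu where
  nplus: "ncword [(xplus \<alpha>, r)] \<in> F_rels lam mu"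
| cartan1: "ncsub (ncword [(h1, r)])
             (ncscale (if r = 0 then of_nat (fst lam + fst mu) else 0) (ncword [])) \<in> F_rels lam mu"
| cartan2: "ncsub (ncword [(h2, r)])
             (ncscale (if r = 0 then of_nat (snd lam + snd mu) else 0) (ncword [])) \<in> F_rels lam mu"
| pow0: "ncword (replicate (wt_on lam \<alpha> + wt_on mu \<alpha> + 1) (xminus \<alpha>, 0)) \<in> F_rels lam mu"
| pow1: "ncword (replicate (min (wt_on lam \<alpha>) (wt_on mu \<alpha>) + 1) (xminus \<alpha>, 1)) \<in> F_rels lam mu"
| high: "r \<ge> 2 \<Longrightarrow> ncword [(xminus \<alpha>, r)] \<in> F_rels lam mu"

text \<open>Annihilator of v in F_{lambda,mu}, pulled back to the free algebra:
  the left ideal generated by F_rels plus the two-sided ideal generated by env_rels.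
  An element y of the free algebra satisfies y v = 0 in F_{lambda,mu} iff y \<in> ann_F.\<close>
inductive_set ann_F :: "nat \<times> nat \<Rightarrow> nat \<times> nat \<Rightarrow> ncpoly set" for lam mu where
  gen: "y \<in> F_rels lam mu \<Longrightarrow> y \<in> ann_F lam mu"
| env: "y \<in> env_rels \<Longrightarrow> finsupp a \<Longrightarrow> finsupp b \<Longrightarrow> ncmul (ncmul a y) b \<in> ann_F lam mu"
| zero: "(\<lambda>w. 0) \<in> ann_F lam mu"
| add: "x \<in> ann_F lam mu \<Longrightarrow> y \<in> ann_F lam mu \<Longrightarrow> ncadd x y \<in> ann_F lam mu"
| lmul: "x \<in> ann_F lam mu \<Longrightarrow> finsupp p \<Longrightarrow> ncmul p x \<in> ann_F lam mu"

text \<open>(Representatives of) elements of U(n^- \<otimes> 1): finitely supported polynomials in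
  the letters x^-_alpha \<otimes> 1.\<close>
definition in_Unminus :: "ncpoly \<Rightarrow> bool" where
  "in_Unminus p \<longleftrightarrow> finsupp p \<and>
     (\<forall>w. p w \<noteq> 0 \<longrightarrow> set w \<subseteq> {(xminus R10, 0), (xminus R11, 0), (xminus R01, 0)})"

definition Xs :: "nat \<times> nat \<times> nat \<Rightarrow> ncpoly" where
  "Xs s = (case s of (a, b, c) \<Rightarrow>
     ncscale (1 / of_nat (fact a * fact b * fact c))
       (ncword (replicate a (xminus R10, 1) @ replicate b (xminus R11, 1) @ replicate c (xminus R01, 1))))"

definition S_A :: "nat \<times> nat \<Rightarrow> nat \<times> nat \<Rightarrow> (nat \<times> nat \<times> nat) set" where
  "S_A lam mu = (case lam of (m1, m2) \<Rightarrow> case mu of (n1, n2) \<Rightarrow>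
     {(a, b, c). a \<le> min m1 n1 \<and> c \<le> min m2 n2 \<and> a + b + c \<le> min (m1 + m2) (n1 + n2)
        \<and> 2 * a + b \<le> m1 + n1 \<and> 2 * c + b \<le> m2 + n2})"

text \<open>succ_ord s s' means s \<succ> s' (equivalently s' \<prec> s).\<close>
definition succ_ord :: "nat \<times> nat \<times> nat \<Rightarrow> nat \<times> nat \<times> nat \<Rightarrow> bool" where
  "succ_ord s s' = (case s of (a, b, c) \<Rightarrow> case s' of (a', b', c') \<Rightarrow>
     c < c' \<or> (c = c' \<and> a < a') \<or> (c = c' \<and> a = a' \<and> b < b'))"

end

theory Submission
  imports Defs
begin

lemma ncmul_Nil: "ncmul p q [] = p [] * q []"
  by (simp add: ncmul_def)

lemma ncmul_Cons: "ncmul p q (a # w) = p [] * q (a # w) + ncmul (\<lambda>u. p (a # u)) q w"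
  unfolding ncmul_def
  by (simp add: sum.atMost_Suc_shift del: sum.atMost_Suc)

lemma ncmul_lin1: "ncmul (\<lambda>u. x * p u + y * p' u) q w = x * ncmul p q w + y * ncmul p' q w"
  unfolding ncmul_def by (simp add: sum.distrib sum_distrib_left algebra_simps)

lemma ncmul_lin2: "ncmul p (\<lambda>u. x * q u + y * q' u) w = x * ncmul p q w + y * ncmul p q' w"
  unfolding ncmul_def by (simp add: sum.distrib sum_distrib_left algebra_simps)

lemma ncmul_zero1: "ncmul (\<lambda>u. 0) q w = 0" unfolding ncmul_def by simp
lemma ncmul_zero2: "ncmul p (\<lambda>u. 0) w = 0" unfolding ncmul_def by simp

lemma ncmul_assoc: "ncmul (ncmul p q) r w = ncmul p (ncmul q r) w"
proof (induction w arbitrary: p q r)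
  case Nil then show ?case by (simp add: ncmul_Nil)
next
  case (Cons a w)
  have D: "(\<lambda>u. ncmul p q (a # u)) = (\<lambda>u. p [] * q (a # u) + 1 * ncmul (\<lambda>u. p (a # u)) q u)"
    by (rule ext) (simp add: ncmul_Cons)
  have "ncmul (ncmul p q) r (a # w) = p [] * q [] * r (a # w) +
     ncmul (\<lambda>u. p [] * q (a # u) + 1 * ncmul (\<lambda>u. p (a # u)) q u) r w"
    by (subst ncmul_Cons) (simp only: D ncmul_Nil)
  also have "\<dots> = p [] * q [] * r (a # w) + p [] * ncmul (\<lambda>u. q (a # u)) r w
      + ncmul (ncmul (\<lambda>u. p (a # u)) q) r w"
    using ncmul_lin1[of "p []" "\<lambda>u. q (a # u)" 1 "ncmul (\<lambda>u. p (a # u)) q" r w] by simp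
  also have "\<dots> = p [] * q [] * r (a # w) + p [] * ncmul (\<lambda>u. q (a # u)) r w
      + ncmul (\<lambda>u. p (a # u)) (ncmul q r) w"
    using Cons.IH by simp
  also have "\<dots> = ncmul p (ncmul q r) (a # w)"
    by (simp add: ncmul_Cons ncmul_Nil algebra_simps)
  finally show ?case .
qed

lemma ncmul_one1: "ncmul (ncword []) q w = q w"
  by (cases w) (simp_all add: ncmul_Nil ncmul_Cons ncword_def ncmul_zero1)

lemma ncmul_one2: "ncmul q (ncword []) w = q w"
proof (induction w arbitrary: q)
  case Nil then show ?case by (simp add: ncmul_Nil ncword_def)
next
  case (Cons a w) then show ?case by (simp add: ncmul_Cons ncword_def)
qed

lemma ncword_Cons_mul: "ncmul (ncword [x]) q w = (case w of [] \<Rightarrow> 0 | b # w' \<Rightarrow> if b = x then q w' else 0)"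
proof (cases w)
  case Nil then show ?thesis by (simp add: ncmul_Nil ncword_def)
next
  case (Cons b w')
  have eq: "(\<lambda>u. ncword [x] (b # u)) = (if b = x then ncword [] else (\<lambda>u. 0))"
    by (auto simp: ncword_def)
  have z: "ncword [x] [] = 0" by (simp add: ncword_def)
  show ?thesis using Cons
    by (simp only: ncmul_Cons eq z) (simp add: ncmul_one1 ncmul_zero1)
qed

lemma ncword_Cons: "ncword (x # w) = ncmul (ncword [x]) (ncword w)"
  apply (rule ext)
  apply (subst ncword_Cons_mul)
  apply (auto simp: ncword_def split: list.split)
  done

lemma ncmul_support: "ncmul p q w \<noteq> 0 \<Longrightarrow> \<exists>i. p (take i w) \<noteq> 0 \<and> q (drop i w) \<noteq> 0"
  unfolding ncmul_def by (metis (no_types, lifting) mult_not_zero sum.neutral)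

lemma finsupp_ncmul: assumes "finsupp p" "finsupp q" shows "finsupp (ncmul p q)"
proof -
  have "{w. ncmul p q w \<noteq> 0} \<subseteq> (\<lambda>(u,v). u @ v) ` ({w. p w \<noteq> 0} \<times> {w. q w \<noteq> 0})"
  proof
    fix w assume "w \<in> {w. ncmul p q w \<noteq> 0}"
    then obtain i where "p (take i w) \<noteq> 0" "q (drop i w) \<noteq> 0" using ncmul_support by blast
    then show "w \<in> (\<lambda>(u,v). u @ v) ` ({w. p w \<noteq> 0} \<times> {w. q w \<noteq> 0})"
      by (intro image_eqI[where x="(take i w, drop i w)"]) auto
  qed
  then show ?thesis using assms unfolding finsupp_def by (meson finite_SigmaI finite_imageI finite_subset)
qed

lemma finsupp_ncword: "finsupp (ncword u)"
  unfolding finsupp_def ncword_def by simp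

lemma finsupp_lin: assumes "finsupp p" "finsupp q" shows "finsupp (\<lambda>w. x * p w + y * q w)"
proof -
  have "{w. x * p w + y * q w \<noteq> 0} \<subseteq> {w. p w \<noteq> 0} \<union> {w. q w \<noteq> 0}" by auto
  then show ?thesis using assms unfolding finsupp_def by (meson finite_Un finite_subset)
qed

lemma finsupp_zero: "finsupp (\<lambda>w. 0)" unfolding finsupp_def by simp


lemma ncmul_scale1: "ncmul (\<lambda>u. c * p u) q w = c * ncmul p q w"
  unfolding ncmul_def by (simp add: sum_distrib_left algebra_simps)
lemma ncmul_scale2: "ncmul p (\<lambda>u. c * q u) w = c * ncmul p q w"
  unfolding ncmul_def by (simp add: sum_distrib_left algebra_simps)
lemma ncmul_add1: "ncmul (\<lambda>u. p u + p' u) q w = ncmul p q w + ncmul p' q w"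
  unfolding ncmul_def by (simp add: sum.distrib algebra_simps)
lemma ncmul_add2: "ncmul p (\<lambda>u. q u + q' u) w = ncmul p q w + ncmul p q' w"
  unfolding ncmul_def by (simp add: sum.distrib algebra_simps)
lemma ncmul_sub1: "ncmul (\<lambda>u. p u - p' u) q w = ncmul p q w - ncmul p' q w"
  unfolding ncmul_def by (simp add: sum_subtractf algebra_simps)
lemma ncmul_sub2: "ncmul p (\<lambda>u. q u - q' u) w = ncmul p q w - ncmul p q' w"
  unfolding ncmul_def by (simp add: sum_subtractf algebra_simps)

lemma ncmul_assoc_fun: "ncmul (ncmul p q) r = ncmul p (ncmul q r)"
  by (rule ext) (rule ncmul_assoc)

inductive_set EI :: "ncpoly set" where
  gen: "y \<in> env_rels \<Longrightarrow> finsupp a \<Longrightarrow> finsupp b \<Longrightarrow> ncmul (ncmul a y) b \<in> EI"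
| zero: "(\<lambda>w. 0) \<in> EI"
| add: "x \<in> EI \<Longrightarrow> y \<in> EI \<Longrightarrow> ncadd x y \<in> EI"

lemma finsupp_scale: "finsupp p \<Longrightarrow> finsupp (\<lambda>w. c * p w)"
  using finsupp_lin[of p p c 0] by simp

lemma EI_scale: "x \<in> EI \<Longrightarrow> (\<lambda>w. c * x w) \<in> EI"
proof (induction rule: EI.induct)
  case (gen y a b)
  have "(\<lambda>w. c * ncmul (ncmul a y) b w) = ncmul (ncmul (\<lambda>w. c * a w) y) b"
  proof -
    have "ncmul (\<lambda>w. c * a w) y = (\<lambda>w. c * ncmul a y w)" by (rule ext) (rule ncmul_scale1)
    then show ?thesis by (intro ext) (simp only: ncmul_scale1)
  qed
  then show ?case using gen by (simp add: EI.gen finsupp_scale)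
next
  case zero then show ?case by (simp add: EI.zero)
next
  case (add x y)
  have "(\<lambda>w. c * ncadd x y w) = ncadd (\<lambda>w. c * x w) (\<lambda>w. c * y w)"
    by (simp add: ncadd_def algebra_simps)
  then show ?case using add by (simp add: EI.add)
qed

lemma EI_lmul: "x \<in> EI \<Longrightarrow> finsupp p \<Longrightarrow> ncmul p x \<in> EI"
proof (induction rule: EI.induct)
  case (gen y a b)
  have "ncmul p (ncmul (ncmul a y) b) = ncmul (ncmul (ncmul p a) y) b"
    by (simp add: ncmul_assoc_fun)
  then show ?case using gen by (simp add: EI.gen finsupp_ncmul)
next
  case zero
  have "ncmul p (\<lambda>w. 0) = (\<lambda>w. 0)" by (rule ext) (simp add: ncmul_zero2)
  then show ?case by (simp add: EI.zero)
next
  case (add x y)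
  have "ncmul p (ncadd x y) = ncadd (ncmul p x) (ncmul p y)"
    by (rule ext) (simp add: ncadd_def ncmul_add2[symmetric])
  then show ?case using add by (simp add: EI.add)
qed

lemma EI_rmul: "x \<in> EI \<Longrightarrow> finsupp p \<Longrightarrow> ncmul x p \<in> EI"
proof (induction rule: EI.induct)
  case (gen y a b)
  have "ncmul (ncmul (ncmul a y) b) p = ncmul (ncmul a y) (ncmul b p)"
    by (simp add: ncmul_assoc_fun)
  then show ?case using gen by (simp add: EI.gen finsupp_ncmul)
next
  case zero
  have "ncmul (\<lambda>w. 0) p = (\<lambda>w. 0)" by (rule ext) (simp add: ncmul_zero1)
  then show ?case by (simp add: EI.zero)
next
  case (add x y)
  have "ncmul (ncadd x y) p = ncadd (ncmul x p) (ncmul y p)"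
    by (rule ext) (simp add: ncadd_def ncmul_add1[symmetric])
  then show ?case using add by (simp add: EI.add)
qed

lemma EI_env: "y \<in> env_rels \<Longrightarrow> y \<in> EI"
proof -
  assume y: "y \<in> env_rels"
  have "ncmul (ncmul (ncword []) y) (ncword []) = y"
    by (rule ext) (simp add: ncmul_one1 ncmul_one2)
  moreover have "ncmul (ncmul (ncword []) y) (ncword []) \<in> EI"
    by (rule EI.gen[OF y finsupp_ncword finsupp_ncword])
  ultimately show ?thesis by simp
qed

lemma EI_ann: "x \<in> EI \<Longrightarrow> x \<in> ann_F lam mu"
  by (induction rule: EI.induct) (auto intro: ann_F.intros)

lemma ann_scale: "x \<in> ann_F lam mu \<Longrightarrow> (\<lambda>w. c * x w) \<in> ann_F lam mu"
proof -
  assume x: "x \<in> ann_F lam mu"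
  have "ncmul (ncscale c (ncword [])) x = (\<lambda>w. c * x w)"
    by (rule ext) (simp add: ncscale_def ncmul_scale1 ncmul_one1)
  moreover have "finsupp (ncscale c (ncword []))"
    unfolding ncscale_def by (rule finsupp_scale[OF finsupp_ncword])
  ultimately show ?thesis using ann_F.lmul[OF x] by metis
qed

definition Rel :: "ncpoly \<Rightarrow> ncpoly \<Rightarrow> bool" where
  "Rel p q \<longleftrightarrow> finsupp p \<and> finsupp q \<and> ncsub p q \<in> EI"

lemma Rel_refl: "finsupp p \<Longrightarrow> Rel p p"
  unfolding Rel_def ncsub_def by (simp add: EI.zero)

lemma Rel_eqI: "finsupp p \<Longrightarrow> p = q \<Longrightarrow> Rel p q"
  using Rel_refl by simp

lemma part_equivp_Rel: "part_equivp Rel"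
proof (rule part_equivpI)
  show "\<exists>x. Rel x x" using Rel_refl finsupp_zero by blast
  show "symp Rel"
  proof (rule sympI)
    fix p q assume "Rel p q"
    then have "(\<lambda>w. (-1) * ncsub p q w) \<in> EI" using EI_scale unfolding Rel_def by blast
    moreover have "(\<lambda>w. (-1) * ncsub p q w) = ncsub q p" by (rule ext) (simp add: ncsub_def)
    ultimately show "Rel q p" using \<open>Rel p q\<close> unfolding Rel_def by simp
  qed
  show "transp Rel"
  proof (rule transpI)
    fix p q r assume "Rel p q" "Rel q r"
    then have "ncadd (ncsub p q) (ncsub q r) \<in> EI" unfolding Rel_def by (simp add: EI.add)
    moreover have "ncadd (ncsub p q) (ncsub q r) = ncsub p r" by (rule ext) (simp add: ncadd_def ncsub_def)
    ultimately show "Rel p r" using \<open>Rel p q\<close> \<open>Rel q r\<close> unfolding Rel_def by simp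
  qed
qed

quotient_type U = ncpoly / partial: Rel
  by (rule part_equivp_Rel)


lemma finsupp_add: "finsupp p \<Longrightarrow> finsupp q \<Longrightarrow> finsupp (ncadd p q)"
  using finsupp_lin[of p q 1 1] by (simp add: ncadd_def)
lemma finsupp_sub: "finsupp p \<Longrightarrow> finsupp q \<Longrightarrow> finsupp (ncsub p q)"
  using finsupp_lin[of p q 1 "-1"] by (simp add: ncsub_def)
lemma finsupp_neg: "finsupp p \<Longrightarrow> finsupp (\<lambda>w. - p w)"
  using finsupp_scale[of p "-1"] by simp

lemma EI_neg: "x \<in> EI \<Longrightarrow> (\<lambda>w. - x w) \<in> EI"
  using EI_scale[of x "-1"] by simp

lemma Rel_eq_EI: "Rel p q \<longleftrightarrow> finsupp p \<and> finsupp q \<and> ncsub p q \<in> EI"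
  by (simp add: Rel_def)

instantiation U :: ring
begin
lift_definition zero_U :: U is "\<lambda>w. 0" by (rule Rel_refl[OF finsupp_zero])
lift_definition plus_U :: "U \<Rightarrow> U \<Rightarrow> U" is ncadd
proof -
  fix p p' q q' assume "Rel p p'" "Rel q q'"
  moreover have "ncsub (ncadd p q) (ncadd p' q') = ncadd (ncsub p p') (ncsub q q')"
    by (rule ext) (simp add: ncadd_def ncsub_def)
  ultimately show "Rel (ncadd p q) (ncadd p' q')"
    unfolding Rel_def by (simp add: finsupp_add EI.add)
qed
lift_definition uminus_U :: "U \<Rightarrow> U" is "\<lambda>p w. - p w"
proof -
  fix p p' assume "Rel p p'"
  moreover have "ncsub (\<lambda>w. - p w) (\<lambda>w. - p' w) = (\<lambda>w. - ncsub p p' w)"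
    by (rule ext) (simp add: ncsub_def)
  ultimately show "Rel (\<lambda>w. - p w) (\<lambda>w. - p' w)"
    unfolding Rel_def by (simp add: finsupp_neg EI_neg)
qed
lift_definition minus_U :: "U \<Rightarrow> U \<Rightarrow> U" is ncsub
proof -
  fix p p' q q' assume "Rel p p'" "Rel q q'"
  moreover have "ncsub (ncsub p q) (ncsub p' q') = ncadd (ncsub p p') (\<lambda>w. - ncsub q q' w)"
    by (rule ext) (simp add: ncadd_def ncsub_def)
  ultimately show "Rel (ncsub p q) (ncsub p' q')"
    unfolding Rel_def by (simp add: finsupp_sub EI.add EI_neg)
qed
lift_definition times_U :: "U \<Rightarrow> U \<Rightarrow> U" is ncmul
proof -
  fix p p' q q' assume a: "Rel p p'" "Rel q q'"
  have "ncsub (ncmul p q) (ncmul p' q') = ncadd (ncmul (ncsub p p') q) (ncmul p' (ncsub q q'))"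
    by (rule ext) (simp add: ncadd_def ncsub_def ncmul_sub1 ncmul_sub2)
  moreover have "ncmul (ncsub p p') q \<in> EI" using a by (simp add: Rel_def EI_rmul)
  moreover have "ncmul p' (ncsub q q') \<in> EI" using a by (simp add: Rel_def EI_lmul)
  ultimately show "Rel (ncmul p q) (ncmul p' q')"
    using a unfolding Rel_def by (simp add: finsupp_ncmul EI.add)
qed
instance
proof
  fix a b c :: U
  show "a + b + c = a + (b + c)"
    apply transfer apply (rule Rel_eqI) apply (auto simp: Rel_def intro!: finsupp_add)[1]
    by (simp add: fun_eq_iff ncadd_def add.assoc)
  show "a + b = b + a"
    apply transfer apply (rule Rel_eqI) apply (auto simp: Rel_def intro!: finsupp_add)[1]
    by (simp add: fun_eq_iff ncadd_def add.commute)
  show "0 + a = a"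
    apply transfer apply (rule Rel_eqI) apply (auto simp: Rel_def intro!: finsupp_add finsupp_zero)[1]
    by (simp add: fun_eq_iff ncadd_def)
  show "- a + a = 0"
    apply transfer apply (rule Rel_eqI) apply (auto simp: Rel_def intro!: finsupp_add finsupp_neg)[1]
    by (simp add: fun_eq_iff ncadd_def)
  show "a - b = a + - b"
    apply transfer apply (rule Rel_eqI) apply (auto simp: Rel_def intro!: finsupp_sub)[1]
    by (simp add: fun_eq_iff ncadd_def ncsub_def)
  show "a * b * c = a * (b * c)"
    apply transfer apply (rule Rel_eqI) apply (auto simp: Rel_def intro!: finsupp_ncmul)[1]
    by (simp add: ncmul_assoc_fun)
  show "(a + b) * c = a * c + b * c"
    apply transfer apply (rule Rel_eqI) apply (auto simp: Rel_def intro!: finsupp_ncmul finsupp_add)[1]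
    by (simp add: fun_eq_iff ncadd_def ncmul_add1)
  show "a * (b + c) = a * b + a * c"
    apply transfer apply (rule Rel_eqI) apply (auto simp: Rel_def intro!: finsupp_ncmul finsupp_add)[1]
    by (simp add: fun_eq_iff ncadd_def ncmul_add2)
qed
end


instantiation U :: monoid_mult
begin
lift_definition one_U :: U is "ncword []" by (rule Rel_refl[OF finsupp_ncword])
instance
proof
  fix a :: U
  show "1 * a = a"
    apply transfer apply (rule Rel_eqI) apply (auto simp: Rel_def intro!: finsupp_ncmul finsupp_ncword)[1]
    by (simp add: fun_eq_iff ncmul_one1)
  show "a * 1 = a"
    apply transfer apply (rule Rel_eqI) apply (auto simp: Rel_def intro!: finsupp_ncmul finsupp_ncword)[1]
    by (simp add: fun_eq_iff ncmul_one2)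
qed
end

lift_definition cst :: "complex \<Rightarrow> U" is "\<lambda>c. ncscale c (ncword [])"
  unfolding ncscale_def by (rule Rel_refl[OF finsupp_scale[OF finsupp_ncword]])

lift_definition Lt :: "mat3 \<Rightarrow> nat \<Rightarrow> U" is "\<lambda>A r. ncword [(A, r)]"
  by (rule Rel_refl[OF finsupp_ncword])

lift_definition inAnn :: "nat \<times> nat \<Rightarrow> nat \<times> nat \<Rightarrow> U \<Rightarrow> bool" is "\<lambda>lam mu p. p \<in> ann_F lam mu"
proof -
  fix lam mu :: "nat \<times> nat" and p q assume r: "Rel p q"
  have d1: "ncsub p q \<in> ann_F lam mu" using r by (simp add: Rel_def EI_ann)
  have d2: "(\<lambda>w. (-1) * ncsub p q w) \<in> ann_F lam mu" by (rule ann_scale[OF d1])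
  have e1: "ncadd p (\<lambda>w. (-1) * ncsub p q w) = q" by (rule ext) (simp add: ncadd_def ncsub_def)
  have e2: "ncadd q (ncsub p q) = p" by (rule ext) (simp add: ncadd_def ncsub_def)
  show "(p \<in> ann_F lam mu) = (q \<in> ann_F lam mu)"
    using ann_F.add[OF _ d2, of p] ann_F.add[OF _ d1, of q] e1 e2 by metis
qed

lemma cst_add: "cst (a + b) = cst a + cst b"
  apply transfer apply (rule Rel_eqI) apply (auto simp: ncscale_def intro!: finsupp_scale finsupp_ncword)[1]
  by (simp add: fun_eq_iff ncadd_def ncscale_def algebra_simps)
lemma cst_mult: "cst (a * b) = cst a * cst b"
  apply transfer apply (rule Rel_eqI) apply (auto simp: ncscale_def intro!: finsupp_scale finsupp_ncword)[1]
  by (simp add: fun_eq_iff ncscale_def ncmul_scale1 ncmul_scale2 ncmul_one1)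
lemma cst_one: "cst 1 = 1"
  apply transfer apply (rule Rel_eqI) apply (auto simp: ncscale_def intro!: finsupp_ncword)[1]
  by (simp add: fun_eq_iff ncscale_def)
lemma cst_zero: "cst 0 = 0"
  apply transfer apply (rule Rel_eqI) apply (auto simp: ncscale_def intro!: finsupp_zero)[1]
  by (simp add: fun_eq_iff ncscale_def)
lemma cst_comm: "cst c * x = x * cst c"
  apply transfer apply (rule Rel_eqI) apply (auto simp: ncscale_def Rel_def intro!: finsupp_scale finsupp_ncword finsupp_ncmul)[1]
  by (simp add: fun_eq_iff ncscale_def ncmul_scale1 ncmul_scale2 ncmul_one1 ncmul_one2)

lemma inAnn_zero: "inAnn lam mu 0"
  by transfer (rule ann_F.zero)
lemma inAnn_add: "inAnn lam mu x \<Longrightarrow> inAnn lam mu y \<Longrightarrow> inAnn lam mu (x + y)"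
  by transfer (rule ann_F.add)
lemma inAnn_lmul: "inAnn lam mu x \<Longrightarrow> inAnn lam mu (y * x)"
  by transfer (auto simp: Rel_def intro: ann_F.lmul)


abbreviation "E21 \<equiv> Emat 2 1"
abbreviation "E31 \<equiv> Emat 3 1"
abbreviation "E32 \<equiv> Emat 3 2"
abbreviation "E12 \<equiv> Emat 1 2"
abbreviation "E23 \<equiv> Emat 2 3"

lemmas msimps = scaleR_conv_of_real lie_br_def Emat_def matrix_matrix_mult_def vec_eq_iff forall_3 sum_3 h1_def h2_def

lemma br1: "lie_br E21 E31 = 0" by (simp add: msimps)
lemma br2: "lie_br E21 E32 = (-1::real) *\<^sub>R E31" by (simp add: msimps)
lemma br3: "lie_br E31 E32 = 0" by (simp add: msimps)
lemma br4: "lie_br E31 E21 = 0" by (simp add: msimps)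
lemma br5: "lie_br E31 E31 = 0" by (simp add: msimps)
lemma br6: "lie_br E12 E31 = (-1::real) *\<^sub>R E32" by (simp add: msimps)
lemma br7: "lie_br E12 E32 = 0" by (simp add: msimps)
lemma br8: "lie_br E32 E31 = 0" by (simp add: msimps)
lemma br9: "lie_br E23 E31 = E21" by (simp add: msimps)
lemma br10: "lie_br E23 E21 = 0" by (simp add: msimps)
lemma br11: "lie_br E23 E32 = h2" by (simp add: msimps)
lemma br12: "lie_br h2 E32 = (-2::real) *\<^sub>R E32" by (simp add: msimps)
lemma br13: "lie_br E32 E32 = 0" by (simp add: msimps)
lemma br14: "lie_br E12 E21 = h1" by (simp add: msimps)
lemma br15: "lie_br h1 E21 = (-2::real) *\<^sub>R E21" by (simp add: msimps)
lemma br16: "lie_br E21 E21 = 0" by (simp add: msimps)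
lemma br17: "lie_br E32 E21 = E31" by (simp add: msimps)
lemma br18: "lie_br E21 E32 = (-1::real) *\<^sub>R E31" by (simp add: msimps)


lemma ncmul_cst_left: "ncmul (ncscale c (ncword [])) q = ncscale c q"
  by (rule ext) (simp add: ncscale_def ncmul_scale1 ncmul_one1)

lemma Lt_bracket: "Lt A r * Lt B s = Lt B s * Lt A r + Lt (lie_br A B) (r + s)"
proof transfer
  fix A B r s
  have w2: "ncmul (ncword [a]) (ncword [b]) = ncword [a, b]" for a b :: letter
    by (rule ncword_Cons[symmetric])
  have e: "ncsub (ncmul (ncword [(A, r)]) (ncword [(B, s)]))
     (ncadd (ncmul (ncword [(B, s)]) (ncword [(A, r)])) (ncword [(lie_br A B, r + s)]))
    = ncsub (ncsub (ncword [(A, r), (B, s)]) (ncword [(B, s), (A, r)])) (ncword [(lie_br A B, r + s)])"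
    by (simp only: w2) (simp add: fun_eq_iff ncsub_def ncadd_def)
  show "Rel (ncmul (ncword [(A, r)]) (ncword [(B, s)]))
     (ncadd (ncmul (ncword [(B, s)]) (ncword [(A, r)])) (ncword [(lie_br A B, r + s)]))"
    unfolding Rel_def e
    by (auto intro!: finsupp_ncmul finsupp_ncword finsupp_add EI_env env_rels.bracket)
qed

lemma Lt_scaleR: "Lt (c *\<^sub>R A) r = cst (complex_of_real c) * Lt A r"
proof transfer
  fix c A r
  show "Rel (ncword [(c *\<^sub>R A, r)]) (ncmul (ncscale (complex_of_real c) (ncword [])) (ncword [(A, r)]))"
    unfolding Rel_def ncmul_cst_left
    using EI_env[OF env_rels.lin_scale[of c A r]]
    by (auto intro!: finsupp_ncword finsupp_scale simp: ncscale_def)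
qed

lemma cst_neg: "cst (- a) = - cst a"
proof -
  have "cst a + cst (-a) = 0" using cst_add[of a "-a"] cst_zero by simp
  then show ?thesis by (metis minus_unique)
qed

lemma Lt_zero: "Lt 0 r = 0"
  using Lt_scaleR[of 0 "0" r] by (simp add: cst_zero)

lemma Lt_commute: "lie_br A B = 0 \<Longrightarrow> Lt A r * Lt B s = Lt B s * Lt A r"
  using Lt_bracket[of A r B s] by (simp add: Lt_zero)

lemma Lt_neg: "Lt (- A) r = - Lt A r"
  using Lt_scaleR[of "-1" A r] by (simp add: cst_neg cst_one)

lemma Lt_m2: "Lt ((-2::real) *\<^sub>R A) r = - cst 2 * Lt A r"
  using Lt_scaleR[of "-2" A r] cst_neg[of 2] by simp

lift_definition Wd :: "letter list \<Rightarrow> U" is ncword by (rule Rel_refl[OF finsupp_ncword])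

lemma Wd_Nil: "Wd [] = 1" by transfer (rule Rel_refl[OF finsupp_ncword])
lemma Wd_Cons: "Wd (x # w) = Lt (fst x) (snd x) * Wd w"
  apply transfer apply (rule Rel_eqI[OF finsupp_ncword]) by (metis ncword_Cons prod.collapse)
lemma Wd_append: "Wd (u @ w) = Wd u * Wd w"
  by (induction u) (simp_all add: Wd_Nil Wd_Cons mult.assoc)
lemma Wd_replicate: "Wd (replicate n (A, r)) = Lt A r ^ n"
  by (induction n) (simp_all add: Wd_Nil Wd_Cons)

lemma inAnn_Wd: "ncword w \<in> ann_F lam mu \<Longrightarrow> inAnn lam mu (Wd w)"
  by transfer simp

lemma ann_xplus: "inAnn lam mu (Lt (xplus \<alpha>) r)"
  using inAnn_Wd[of "[(xplus \<alpha>, r)]"] by (simp add: Wd_Cons Wd_Nil ann_F.gen F_rels.nplus)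
lemma ann_high: "r \<ge> 2 \<Longrightarrow> inAnn lam mu (Lt (xminus \<alpha>) r)"
  using inAnn_Wd[of "[(xminus \<alpha>, r)]"] by (simp add: Wd_Cons Wd_Nil ann_F.gen F_rels.high)
lemma ann_pow0: "inAnn lam mu (Lt (xminus \<alpha>) 0 ^ (wt_on lam \<alpha> + wt_on mu \<alpha> + 1))"
  using inAnn_Wd[OF ann_F.gen[OF F_rels.pow0]] by (simp only: Wd_replicate)
lemma ann_pow1: "inAnn lam mu (Lt (xminus \<alpha>) 1 ^ (min (wt_on lam \<alpha>) (wt_on mu \<alpha>) + 1))"
  using inAnn_Wd[OF ann_F.gen[OF F_rels.pow1]] by (simp only: Wd_replicate)

lemma ann_h1: "r \<ge> 1 \<Longrightarrow> inAnn lam mu (Lt h1 r)"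
proof -
  assume r: "r \<ge> 1"
  have "ncsub (ncword [(h1, r)]) (ncscale (if r = 0 then of_nat (fst lam + fst mu) else 0) (ncword [])) = ncword [(h1, r)]"
    using r by (simp add: fun_eq_iff ncsub_def ncscale_def)
  then have "ncword [(h1, r)] \<in> ann_F lam mu" using ann_F.gen[OF F_rels.cartan1[of r lam mu]] by simp
  then show ?thesis using inAnn_Wd[of "[(h1, r)]"] by (simp add: Wd_Cons Wd_Nil)
qed
lemma ann_h2: "r \<ge> 1 \<Longrightarrow> inAnn lam mu (Lt h2 r)"
proof -
  assume r: "r \<ge> 1"
  have "ncsub (ncword [(h2, r)]) (ncscale (if r = 0 then of_nat (snd lam + snd mu) else 0) (ncword [])) = ncword [(h2, r)]"
    using r by (simp add: fun_eq_iff ncsub_def ncscale_def)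
  then have "ncword [(h2, r)] \<in> ann_F lam mu" using ann_F.gen[OF F_rels.cartan2[of r lam mu]] by simp
  then show ?thesis using inAnn_Wd[of "[(h2, r)]"] by (simp add: Wd_Cons Wd_Nil)
qed


lemma comm_pow: assumes "x * y = y * (x::U)" shows "x * y ^ n = y ^ n * x"
proof (induction n)
  case 0 then show ?case by simp
next
  case (Suc n)
  have "x * y ^ Suc n = (x * y) * y ^ n" by (simp add: mult.assoc)
  also have "\<dots> = y * (x * y ^ n)" using assms by (simp add: mult.assoc)
  also have "\<dots> = y ^ Suc n * x" using Suc by (simp add: mult.assoc)
  finally show ?case .
qed

lemma comm_pow2: assumes "x * y = y * (x::U)" shows "x ^ m * y ^ n = y ^ n * x ^ m"
proof -
  have "y ^ n * x = x * y ^ n" using comm_pow[OF assms] by simp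
  then show ?thesis using comm_pow[of "y ^ n" x m] by simp
qed

lemma cst_Suc: "cst (of_nat (Suc n)) = cst (of_nat n) + 1"
  by (simp add: cst_add cst_one add.commute)

lemma mult_cst_left: "x * (cst c * y) = cst c * (x * y)"
  by (metis cst_comm mult.assoc)

lemma cst_comm_pow: "cst c * x ^ n = x ^ n * cst c" by (rule cst_comm)

lemma G4:
  assumes "A * B = B * A + C" "inAnn lam mu A" "\<And>j. inAnn lam mu (C * B ^ j)"
  shows "inAnn lam mu (A * B ^ m)"
proof (induction m)
  case 0 then show ?case using assms by simp
next
  case (Suc m)
  have "A * B ^ Suc m = B * (A * B ^ m) + C * B ^ m"
    by (simp add: mult.assoc[symmetric] assms(1) distrib_right power_commutes)
  then show ?case using Suc assms(3) by (simp add: inAnn_add inAnn_lmul)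
qed

lemma G1:
  assumes "A * B = B * A + C" "C * B = B * C"
  shows "A * B ^ k = B ^ k * A + cst (of_nat k) * B ^ (k - 1) * C"
proof (induction k)
  case 0 then show ?case by (simp add: cst_zero)
next
  case (Suc k)
  have "A * B ^ Suc k = (B * A + C) * B ^ k" by (simp add: mult.assoc[symmetric] assms(1) power_commutes)
  also have "\<dots> = B * (A * B ^ k) + B ^ k * C"
    by (simp add: distrib_right mult.assoc comm_pow[OF assms(2)])
  also have "\<dots> = B ^ Suc k * A + (B * (cst (of_nat k) * B ^ (k - 1)) + B ^ k) * C"
    by (simp add: Suc distrib_left distrib_right mult.assoc)
  also have "B * (cst (of_nat k) * B ^ (k - 1)) + B ^ k = cst (of_nat (Suc k)) * B ^ k"
  proof (cases k)
    case 0 then show ?thesis by (simp add: cst_zero cst_one)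
  next
    case (Suc k')
    then show ?thesis
      by (simp add: mult_cst_left cst_Suc distrib_right distrib_left del: of_nat_Suc)
  qed
  finally show ?case by simp
qed

lemma G1':
  assumes "A * B = B * A + C" "C * A = A * C"
  shows "A ^ k * B = B * A ^ k + cst (of_nat k) * A ^ (k - 1) * C"
proof (induction k)
  case 0 then show ?case by (simp add: cst_zero)
next
  case (Suc k)
  have "A ^ Suc k * B = A * (A ^ k * B)" by (simp add: mult.assoc)
  also have "\<dots> = (B * A + C) * A ^ k + A * (cst (of_nat k) * A ^ (k - 1) * C)"
    by (simp add: Suc distrib_left mult.assoc[symmetric] assms(1))
  also have "\<dots> = B * A ^ Suc k + (A ^ k + cst (of_nat k) * (A * A ^ (k - 1))) * C"
    by (simp add: distrib_right distrib_left mult.assoc comm_pow[OF assms(2)] power_commutes mult_cst_left)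
  also have "A ^ k + cst (of_nat k) * (A * A ^ (k - 1)) = cst (of_nat (Suc k)) * A ^ k"
  proof (cases k)
    case 0 then show ?thesis by (simp add: cst_zero cst_one)
  next
    case (Suc k')
    then show ?thesis by (simp add: cst_Suc distrib_right add.commute del: of_nat_Suc)
  qed
  finally show ?case by (simp add: mult.assoc)
qed


lemma inAnn_neg: "inAnn lam mu x \<Longrightarrow> inAnn lam mu (- x)"
proof -
  assume "inAnn lam mu x"
  then have "inAnn lam mu ((-1) * x)" by (rule inAnn_lmul)
  then show ?thesis by simp
qed
lemma inAnn_diff: "inAnn lam mu x \<Longrightarrow> inAnn lam mu y \<Longrightarrow> inAnn lam mu (x - y)"
proof -
  assume a: "inAnn lam mu x" and b: "inAnn lam mu y"
  have "inAnn lam mu (x + - y)" by (rule inAnn_add[OF a inAnn_neg[OF b]])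
  then show ?thesis by (simp only: diff_conv_add_uminus)
qed
lemma inAnn_cancel: "c \<noteq> 0 \<Longrightarrow> inAnn lam mu (cst c * x) \<Longrightarrow> inAnn lam mu x"
proof -
  assume c: "c \<noteq> 0" and a: "inAnn lam mu (cst c * x)"
  have "cst (1 / c) * (cst c * x) = (cst (1 / c) * cst c) * x" by (simp only: mult.assoc)
  also have "\<dots> = x" using c by (simp only: cst_mult[symmetric]) (simp add: cst_one)
  finally have e: "cst (1 / c) * (cst c * x) = x" .
  show ?thesis using inAnn_lmul[OF a, where y="cst (1/c)"] unfolding e .
qed
lemma inAnn_eqv_trans: "inAnn lam mu (x - y) \<Longrightarrow> inAnn lam mu (y - z) \<Longrightarrow> inAnn lam mu (x - z)"
proof -
  assume a: "inAnn lam mu (x - y)" and b: "inAnn lam mu (y - z)"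
  have e: "(x - y) + (y - z) = x - (z::U)" by (simp add: algebra_simps)
  show ?thesis using inAnn_add[OF a b] unfolding e .
qed
lemma inAnn_eqv: "inAnn lam mu (x - y) \<Longrightarrow> inAnn lam mu y \<Longrightarrow> inAnn lam mu x"
proof -
  assume a: "inAnn lam mu (x - y)" and b: "inAnn lam mu y"
  have e: "(x - y) + y = (x::U)" by (simp add: algebra_simps)
  show ?thesis using inAnn_add[OF a b] unfolding e .
qed
lemma inAnn_eqv': "inAnn lam mu (x - y) \<Longrightarrow> inAnn lam mu x \<Longrightarrow> inAnn lam mu y"
proof -
  assume a: "inAnn lam mu (x - y)" and b: "inAnn lam mu x"
  have e: "x - (x - y) = (y::U)" by (simp add: algebra_simps)
  show ?thesis using inAnn_diff[OF b a] unfolding e .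
qed

lemma G2:
  assumes "A * B = B * A + C" "C * A = A * C" "C * B = B * C"
  shows "\<exists>S. A ^ n * B ^ m = B ^ m * A ^ n + S * (C::U)"
proof (induction n)
  case 0 have "A ^ 0 * B ^ m = B ^ m * A ^ 0 + 0 * C" by simp
  then show ?case by blast
next
  case (Suc n)
  then obtain S where S: "A ^ n * B ^ m = B ^ m * A ^ n + S * C" by blast
  have "A ^ Suc n * B ^ m = A * (A ^ n * B ^ m)" by (simp add: mult.assoc)
  also have "\<dots> = (A * B ^ m) * A ^ n + A * S * C" by (simp add: S distrib_left mult.assoc)
  also have "\<dots> = B ^ m * A ^ Suc n + (cst (of_nat m) * B ^ (m - 1) * A ^ n + A * S) * C"
    by (simp add: G1[OF assms(1,3)] distrib_right mult.assoc comm_pow[OF assms(2)] power_commutes)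
  finally show ?case by blast
qed

definition ffc :: "nat \<Rightarrow> nat \<Rightarrow> complex" where
  "ffc m j = (\<Prod>i<j. of_nat (m - i))"

lemma ffc_Suc: "ffc m (Suc j) = ffc m j * of_nat (m - j)"
  by (simp add: ffc_def)
lemma ffc_nz: "j \<le> m \<Longrightarrow> ffc m j \<noteq> 0"
  by (simp add: ffc_def)

lemma G3:
  assumes "A * B = B * A + C" "C * A = A * C" "C * B = B * C"
    and X: "\<And>i. inAnn lam mu (A * C ^ i * X)"
  shows "j \<le> m \<Longrightarrow> inAnn lam mu (A ^ j * B ^ m * X - cst (ffc m j) * B ^ (m - j) * C ^ j * X)"
proof (induction j)
  case 0 then show ?case by (simp add: ffc_def cst_one inAnn_zero)
next
  case (Suc j)
  then have IH: "inAnn lam mu (A ^ j * B ^ m * X - cst (ffc m j) * B ^ (m - j) * C ^ j * X)" by simp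
  have "inAnn lam mu (A * (A ^ j * B ^ m * X - cst (ffc m j) * B ^ (m - j) * C ^ j * X))"
    by (rule inAnn_lmul[OF IH])
  have e1: "A * (cst (ffc m j) * B ^ (m - j) * C ^ j * X) =
     cst (ffc m j) * B ^ (m - j) * (A * C ^ j * X) +
     cst (ffc m (Suc j)) * B ^ (m - Suc j) * C ^ Suc j * X"
  proof -
    have "A * (cst (ffc m j) * B ^ (m - j) * C ^ j * X) =
       cst (ffc m j) * ((A * B ^ (m - j)) * (C ^ j * X))"
      by (simp add: mult.assoc mult_cst_left)
    also have "\<dots> = cst (ffc m j) * ((B ^ (m - j) * A + cst (of_nat (m - j)) * B ^ (m - j - 1) * C) * (C ^ j * X))"
      by (simp only: G1[OF assms(1,3)])
    also have "\<dots> = cst (ffc m j) * B ^ (m - j) * (A * C ^ j * X) +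
       (cst (ffc m j) * cst (of_nat (m - j))) * B ^ (m - j - 1) * (C * C ^ j * X)"
      by (simp only: distrib_right distrib_left mult.assoc)
    finally show ?thesis by (simp add: ffc_Suc cst_mult mult.assoc)
  qed
  have e2: "inAnn lam mu (cst (ffc m j) * B ^ (m - j) * (A * C ^ j * X))"
    using inAnn_lmul[OF X[of j], where y="cst (ffc m j) * B ^ (m - j)"] by (simp add: mult.assoc)
  have e3: "A ^ Suc j * B ^ m * X - cst (ffc m (Suc j)) * B ^ (m - Suc j) * C ^ Suc j * X =
     A * (A ^ j * B ^ m * X - cst (ffc m j) * B ^ (m - j) * C ^ j * X) + cst (ffc m j) * B ^ (m - j) * (A * C ^ j * X)"
    by (simp only: right_diff_distrib e1) (simp add: mult.assoc)
  show ?case unfolding e3 by (rule inAnn_add[OF _ e2]) (rule inAnn_lmul[OF IH])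
qed



lemma rassoc: "A * B = B * A + C \<Longrightarrow> A * (B * X) = B * (A * X) + C * (X::U)"
  by (metis distrib_right mult.assoc)
lemma rassoc_c: "A * B = B * A \<Longrightarrow> A * (B * X) = B * (A * (X::U))"
  by (metis mult.assoc)

lemma cst_combine: "cst a * X + cst b * X = cst (a + b) * X"
  by (simp add: cst_add distrib_right)

lemma GL:
  assumes ef: "e * f = f * e + H" and eG: "e * G = G * e + H'"
    and Hf: "H * f = f * H + (- cst 2 * G)" and HG: "H * G = G * H + (- cst 2 * G2)"
    and H'G: "H' * G = G * H' + (- cst 2 * G3)"
    and fG: "f * G = G * f" and G2G: "G2 * G = G * G2" and G3G: "G3 * G = G * G3"
    and Ae: "inAnn lam mu e" and AH: "inAnn lam mu H" and AH': "inAnn lam mu H'"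
    and AG2: "inAnn lam mu G2" and AG3: "inAnn lam mu G3"
    and Af: "inAnn lam mu (f ^ (N + 1))"
  shows "N + 1 \<le> p + 2 * s \<Longrightarrow> inAnn lam mu (f ^ p * G ^ s)"
proof -
  have a: "inAnn lam mu (H' * G ^ s)" for s
    apply (rule G4[OF H'G AH'])
    using inAnn_lmul[OF AG3, where y="- cst 2 * G ^ j" for j] by (simp add: mult.assoc comm_pow[OF G3G])
  have b: "inAnn lam mu (e * G ^ s)" for s
    by (rule G4[OF eG Ae a])
  have c: "inAnn lam mu (H * G ^ s)" for s
    apply (rule G4[OF HG AH])
    using inAnn_lmul[OF AG2, where y="- cst 2 * G ^ j" for j] by (simp add: mult.assoc comm_pow[OF G2G])
  have Gf: "G * f ^ j = f ^ j * G" for j using comm_pow[of G f j] fG by simp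
  have HGs: "H * (G * X) = G * (H * X) + (- cst 2 * G2) * X" for X by (rule rassoc[OF HG])
  have Hfs: "H * (f * X) = f * (H * X) + (- cst 2 * G) * X" for X by (rule rassoc[OF Hf])
  have efs: "e * (f * X) = f * (e * X) + H * X" for X by (rule rassoc[OF ef])
  have d: "inAnn lam mu (H * (f ^ Suc j * G ^ s) + cst (of_nat (2 * (j + 1))) * (f ^ j * G ^ Suc s))" for j s
  proof (induction j)
    case 0
    have "H * (f ^ Suc 0 * G ^ s) + cst (of_nat (2 * (0 + 1))) * (f ^ 0 * G ^ Suc s)
        = f * (H * G ^ s) + ((- cst 2 * G) * G ^ s + cst 2 * (G * G ^ s))"
      by (simp add: Hfs add.assoc)
    also have "(- cst 2 * G) * G ^ s + cst 2 * (G * G ^ s) = 0"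
      by (simp add: mult.assoc)
    finally show ?case using inAnn_lmul[OF c[of s], where y=f] by simp
  next
    case (Suc j)
    have "H * (f ^ Suc (Suc j) * G ^ s) + cst (of_nat (2 * (Suc j + 1))) * (f ^ Suc j * G ^ Suc s)
       = f * (H * (f ^ Suc j * G ^ s)) + ((- cst 2 * G) * (f ^ Suc j * G ^ s)
          + cst (of_nat (2 * (Suc j + 1))) * (f ^ Suc j * G ^ Suc s))"
      by (simp only: power_Suc[of f "Suc j"] mult.assoc Hfs add.assoc)
    also have "(- cst 2 * G) * (f ^ Suc j * G ^ s) = cst (- 2) * (f ^ Suc j * G ^ Suc s)"
    proof -
      have "G * (f ^ Suc j * G ^ s) = f ^ Suc j * G ^ Suc s"
        by (simp only: mult.assoc[symmetric] Gf) (simp add: mult.assoc)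
      then show ?thesis by (simp add: cst_neg mult.assoc)
    qed
    also have "cst (- 2) * (f ^ Suc j * G ^ Suc s) + cst (of_nat (2 * (Suc j + 1))) * (f ^ Suc j * G ^ Suc s)
       = f * (cst (of_nat (2 * (j + 1))) * (f ^ j * G ^ Suc s))"
    proof -
      have e: "cst (- 2) + cst (of_nat (2 * (Suc j + 1))) = cst (of_nat (2 * (j + 1)))"
        by (simp add: cst_add[symmetric] algebra_simps)
      show ?thesis by (simp only: distrib_right[symmetric] e mult_cst_left mult.assoc power_Suc)
    qed
    finally have "H * (f ^ Suc (Suc j) * G ^ s) + cst (of_nat (2 * (Suc j + 1))) * (f ^ Suc j * G ^ Suc s)
       = f * (H * (f ^ Suc j * G ^ s) + cst (of_nat (2 * (j + 1))) * (f ^ j * G ^ Suc s))"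
      by (simp add: distrib_left)
    then show ?case using inAnn_lmul[OF Suc, where y=f] by simp
  qed
  have e0: "inAnn lam mu (e * (f * G ^ s))" for s
    by (simp only: efs) (rule inAnn_add[OF inAnn_lmul[OF b] c])
  have e': "inAnn lam mu (e * (f ^ Suc (Suc q) * G ^ s) + cst (of_nat ((q + 2) * (q + 1))) * (f ^ q * G ^ Suc s))" for q s
  proof (induction q)
    case 0
    have "e * (f ^ Suc (Suc 0) * G ^ s) + cst (of_nat ((0 + 2) * (0 + 1))) * (f ^ 0 * G ^ Suc s)
      = f * (e * (f * G ^ s)) + (H * (f ^ Suc 0 * G ^ s) + cst (of_nat (2 * (0 + 1))) * (f ^ 0 * G ^ Suc s))"
      by (simp add: efs mult.assoc add.assoc)
    then show ?case using inAnn_add[OF inAnn_lmul[OF e0, where y=f] d[of 0 s]] by (simp add: add.assoc)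
  next
    case (Suc q)
    have "e * (f ^ Suc (Suc (Suc q)) * G ^ s) + cst (of_nat ((Suc q + 2) * (Suc q + 1))) * (f ^ Suc q * G ^ Suc s)
      = f * (e * (f ^ Suc (Suc q) * G ^ s) + cst (of_nat ((q + 2) * (q + 1))) * (f ^ q * G ^ Suc s))
        + (H * (f ^ Suc (Suc q) * G ^ s) + cst (of_nat (2 * (Suc q + 1))) * (f ^ Suc q * G ^ Suc s))"
    proof -
      have c3: "cst (of_nat ((Suc q + 2) * (Suc q + 1))) = cst (of_nat ((q + 2) * (q + 1))) + cst (of_nat (2 * (Suc q + 1)))"
        by (simp add: cst_add[symmetric] algebra_simps)
      have "e * (f ^ Suc (Suc (Suc q)) * G ^ s) = f * (e * (f ^ Suc (Suc q) * G ^ s)) + H * (f ^ Suc (Suc q) * G ^ s)"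
        by (simp only: power_Suc[of f "Suc (Suc q)"] mult.assoc efs)
      moreover have "f * (cst (of_nat ((q + 2) * (q + 1))) * (f ^ q * G ^ Suc s)) =
         cst (of_nat ((q + 2) * (q + 1))) * (f ^ Suc q * G ^ Suc s)"
        by (simp only: mult_cst_left power_Suc[of f q] mult.assoc)
      moreover have "cst (of_nat ((Suc q + 2) * (Suc q + 1))) * (f ^ Suc q * G ^ Suc s) =
         cst (of_nat ((q + 2) * (q + 1))) * (f ^ Suc q * G ^ Suc s) + cst (of_nat (2 * (Suc q + 1))) * (f ^ Suc q * G ^ Suc s)"
        by (simp only: c3 distrib_right[where 'a=U])
      ultimately show ?thesis by (simp only: distrib_left[where 'a=U] add.assoc add.left_commute)
    qed
    then show ?case using inAnn_add[OF inAnn_lmul[OF Suc, where y=f] d[of "Suc q" s]] by simp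
  qed
  show "N + 1 \<le> p + 2 * s \<Longrightarrow> inAnn lam mu (f ^ p * G ^ s)"
  proof (induction s arbitrary: p)
    case 0
    then have "f ^ p * G ^ 0 = f ^ (p - (N + 1)) * f ^ (N + 1)"
      by (simp only: power_add[symmetric] power_0 mult_1_right) simp
    then show ?case using inAnn_lmul[OF Af] by simp
  next
    case (Suc s)
    then have "N + 1 \<le> Suc (Suc p) + 2 * s" by simp
    then have "inAnn lam mu (f ^ Suc (Suc p) * G ^ s)" by (rule Suc.IH)
    then have x: "inAnn lam mu (e * (f ^ Suc (Suc p) * G ^ s))" by (rule inAnn_lmul)
    have "inAnn lam mu (cst (of_nat ((p + 2) * (p + 1))) * (f ^ p * G ^ Suc s))"
      using inAnn_diff[OF e'[of p s] x] by simp
    moreover have "(of_nat ((p + 2) * (p + 1)) :: complex) \<noteq> 0" by (simp only: of_nat_eq_0_iff) simp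
    ultimately show ?case by (rule inAnn_cancel[rotated])
  qed
qed


inductive_set spanL :: "U set \<Rightarrow> U set \<Rightarrow> U set" for S Gs where
  zero: "0 \<in> spanL S Gs"
| step: "s \<in> S \<Longrightarrow> g \<in> Gs \<Longrightarrow> x \<in> spanL S Gs \<Longrightarrow> s * g + x \<in> spanL S Gs"

lemma spanL_add: "x \<in> spanL S Gs \<Longrightarrow> y \<in> spanL S Gs \<Longrightarrow> x + y \<in> spanL S Gs"
  by (induction rule: spanL.induct) (simp_all add: add.assoc spanL.step)

lemma spanL_gen: "s \<in> S \<Longrightarrow> g \<in> Gs \<Longrightarrow> s * g \<in> spanL S Gs"
  using spanL.step[OF _ _ spanL.zero] by simp

lemma spanL_mono: "x \<in> spanL S Gs \<Longrightarrow> Gs \<subseteq> Gs' \<Longrightarrow> x \<in> spanL S Gs'"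
  by (induction rule: spanL.induct) (auto intro: spanL.intros)

lemma spanL_map:
  assumes "x \<in> spanL S Gs" "0 \<in> Q" "\<And>a b. a \<in> Q \<Longrightarrow> b \<in> Q \<Longrightarrow> a + b \<in> Q"
    "\<And>s g. s \<in> S \<Longrightarrow> g \<in> Gs \<Longrightarrow> s * g * R \<in> Q"
  shows "x * R \<in> Q"
  using assms(1) by (induction rule: spanL.induct) (simp_all add: assms(2-4) distrib_right)

lemma spanL_rmul:
  assumes Yf: "Yw * fw = fw * Yw + Zw" and Zf: "Zw * fw = fw * Zw" and ZY: "Zw * Yw = Yw * Zw"
    and Sm: "\<And>s t. s \<in> S \<Longrightarrow> t \<in> S \<Longrightarrow> s * t \<in> S" and Sf: "fw \<in> S" and Sc: "\<And>c. cst c \<in> S"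
    and x: "x \<in> spanL S {Zw ^ j * Yw ^ (n - j) | j. j < p}"
  shows "x * fw \<in> spanL S {Zw ^ j * Yw ^ (n - j) | j. j < Suc p}"
  using x
proof (induction rule: spanL.induct)
  case zero then show ?case by (simp add: spanL.zero)
next
  case (step s g x)
  then obtain j where j: "j < p" "g = Zw ^ j * Yw ^ (n - j)" by blast
  have Yk: "Yw ^ k * fw = fw * Yw ^ k + cst (of_nat k) * Yw ^ (k - 1) * Zw" for k
    by (rule G1'[OF Yf ZY])
  have Zjf: "Zw ^ j * fw = fw * Zw ^ j" by (rule comm_pow[OF Zf[symmetric], symmetric])
  have ZYk: "Yw ^ k * Zw = Zw * Yw ^ k" for k by (rule comm_pow[OF ZY, symmetric])
  have zz: "Zw ^ i * (Zw * X) = Zw * (Zw ^ i * X)" for i X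
    by (simp only: mult.assoc[symmetric] power_commutes)
  have "g * fw = fw * g + cst (of_nat (n - j)) * (Zw ^ Suc j * Yw ^ (n - Suc j))"
  proof -
    have "g * fw = Zw ^ j * (Yw ^ (n - j) * fw)" using j by (simp add: mult.assoc)
    also have "\<dots> = (Zw ^ j * fw) * Yw ^ (n - j) + cst (of_nat (n - j)) * (Zw ^ j * (Yw ^ (n - j - 1) * Zw))"
      by (simp only: Yk distrib_left mult.assoc mult_cst_left[of "Zw ^ j"])
    also have "\<dots> = fw * g + cst (of_nat (n - j)) * (Zw ^ Suc j * Yw ^ (n - Suc j))"
      using j by (simp add: Zjf ZYk mult.assoc zz)
    finally show ?thesis .
  qed
  then have "s * g * fw + x * fw = (s * fw) * g + (s * cst (of_nat (n - j))) * (Zw ^ Suc j * Yw ^ (n - Suc j)) + x * fw"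
    by (simp add: mult.assoc distrib_left)
  moreover have "(s * fw) * g \<in> spanL S {Zw ^ j * Yw ^ (n - j) | j. j < Suc p}"
    using j step by (intro spanL_gen Sm Sf) auto
  moreover have "(s * cst (of_nat (n - j))) * (Zw ^ Suc j * Yw ^ (n - Suc j)) \<in> spanL S {Zw ^ j * Yw ^ (n - j) | j. j < Suc p}"
  proof (intro spanL_gen Sm Sc)
    show "s \<in> S" using step by simp
    show "Zw ^ Suc j * Yw ^ (n - Suc j) \<in> {Zw ^ j * Yw ^ (n - j) | j. j < Suc p}"
      using j(1) by blast
  qed
  ultimately show ?case using step by (simp add: distrib_right spanL_add)
qed

lemma WL:
  assumes Yf: "Yw * fw = fw * Yw + Zw" and Zf: "Zw * fw = fw * Zw" and ZY: "Zw * Yw = Yw * Zw"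
    and Sm: "\<And>s t. s \<in> S \<Longrightarrow> t \<in> S \<Longrightarrow> s * t \<in> S" and Sf: "fw \<in> S" and Sc: "\<And>c. cst c \<in> S"
  shows "Yw ^ n * fw ^ p - cst (ffc n p) * (Zw ^ p * Yw ^ (n - p)) \<in> spanL S {Zw ^ j * Yw ^ (n - j) | j. j < p}"
proof (induction p)
  case 0 then show ?case by (simp add: ffc_def cst_one spanL.zero)
next
  case (Suc p)
  define \<sigma> where "\<sigma> = Yw ^ n * fw ^ p - cst (ffc n p) * (Zw ^ p * Yw ^ (n - p))"
  have s1: "\<sigma> * fw \<in> spanL S {Zw ^ j * Yw ^ (n - j) | j. j < Suc p}"
    unfolding \<sigma>_def by (rule spanL_rmul[OF Yf Zf ZY Sm Sf Sc Suc.IH])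
  have Yk: "Yw ^ (n - p) * fw = fw * Yw ^ (n - p) + cst (of_nat (n - p)) * Yw ^ (n - p - 1) * Zw"
    by (rule G1'[OF Yf ZY])
  have Zjf: "Zw ^ p * fw = fw * Zw ^ p" by (rule comm_pow[OF Zf[symmetric], symmetric])
  have ZYk: "Yw ^ k * Zw = Zw * Yw ^ k" for k by (rule comm_pow[OF ZY, symmetric])
  have zz: "Zw ^ i * (Zw * X) = Zw * (Zw ^ i * X)" for i X
    by (simp only: mult.assoc[symmetric] power_commutes)
  have top: "cst (ffc n p) * (Zw ^ p * Yw ^ (n - p)) * fw =
     (cst (ffc n p) * fw) * (Zw ^ p * Yw ^ (n - p)) + cst (ffc n (Suc p)) * (Zw ^ Suc p * Yw ^ (n - Suc p))"
  proof -
    have "cst (ffc n p) * (Zw ^ p * Yw ^ (n - p)) * fw = cst (ffc n p) * (Zw ^ p * (Yw ^ (n - p) * fw))"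
      by (simp add: mult.assoc)
    also have "\<dots> = cst (ffc n p) * ((Zw ^ p * fw) * Yw ^ (n - p)) +
        (cst (ffc n p) * cst (of_nat (n - p))) * (Zw ^ p * (Yw ^ (n - p - 1) * Zw))"
      by (simp only: Yk distrib_left mult.assoc mult_cst_left[of "Zw ^ p"])
    also have "\<dots> = (cst (ffc n p) * fw) * (Zw ^ p * Yw ^ (n - p)) + cst (ffc n (Suc p)) * (Zw ^ Suc p * Yw ^ (n - Suc p))"
    proof -
      have h1: "cst (ffc n p) * ((Zw ^ p * fw) * Yw ^ (n - p)) = (cst (ffc n p) * fw) * (Zw ^ p * Yw ^ (n - p))"
        by (simp only: Zjf mult.assoc)
      have h2: "Zw ^ p * (Yw ^ (n - p - 1) * Zw) = Zw ^ Suc p * Yw ^ (n - Suc p)"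
        by (simp only: ZYk mult.assoc[symmetric] power_Suc2[symmetric]) simp
      have h3: "cst (ffc n p) * cst (of_nat (n - p)) = cst (ffc n (Suc p))"
        by (simp add: ffc_Suc cst_mult)
      show ?thesis by (simp only: h1 h2 h3)
    qed
    finally show ?thesis .
  qed
  have ab: "a - (b + c) + b = a - (c::U)" for a b c by (simp add: algebra_simps)
  have "\<sigma> * fw + (cst (ffc n p) * fw) * (Zw ^ p * Yw ^ (n - p))
     = Yw ^ n * fw ^ p * fw - cst (ffc n (Suc p)) * (Zw ^ Suc p * Yw ^ (n - Suc p))"
    unfolding \<sigma>_def by (simp only: left_diff_distrib top ab)
  then have eq: "Yw ^ n * fw ^ Suc p - cst (ffc n (Suc p)) * (Zw ^ Suc p * Yw ^ (n - Suc p))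
     = \<sigma> * fw + (cst (ffc n p) * fw) * (Zw ^ p * Yw ^ (n - p))"
    by (simp only: power_Suc2 mult.assoc)
  have mem: "(cst (ffc n p) * fw) * (Zw ^ p * Yw ^ (n - p)) \<in> spanL S {Zw ^ j * Yw ^ (n - j) | j. j < Suc p}"
    by (intro spanL_gen Sm Sf Sc) blast
  show ?case unfolding eq by (rule spanL_add[OF s1 mem])
qed


abbreviation "Gm \<equiv> Lt E21 1"
abbreviation "Zm \<equiv> Lt E31 1"
abbreviation "Ym \<equiv> Lt E32 1"

definition XU :: "nat \<times> nat \<times> nat \<Rightarrow> U" where
  "XU s = (case s of (a, b, c) \<Rightarrow> cst (1 / of_nat (fact a * fact b * fact c)) * (Gm ^ a * Zm ^ b * Ym ^ c))"

definition NU :: "U set" where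
  "NU = {x. \<exists>p. in_Unminus p \<and> x = abs_U p}"

definition Lo :: "nat \<times> nat \<times> nat \<Rightarrow> U set" where
  "Lo s0 = spanL NU {XU s' | s'. succ_ord s0 s'}"

definition LoA :: "nat \<times> nat \<Rightarrow> nat \<times> nat \<Rightarrow> nat \<times> nat \<times> nat \<Rightarrow> U set" where
  "LoA lam mu s0 = {x. \<exists>l \<in> Lo s0. inAnn lam mu (x - l)}"

definition Pgoal :: "nat \<times> nat \<Rightarrow> nat \<times> nat \<Rightarrow> nat \<times> nat \<times> nat \<Rightarrow> bool" where
  "Pgoal lam mu s0 \<longleftrightarrow> (\<exists>l \<in> Lo s0. inAnn lam mu (XU s0 + l))"

definition Lset :: "letter set" where
  "Lset = {(xminus R10, 0), (xminus R11, 0), (xminus R01, 0)}"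

lemma in_Unminus_alt: "in_Unminus p \<longleftrightarrow> finsupp p \<and> (\<forall>w. p w \<noteq> 0 \<longrightarrow> set w \<subseteq> Lset)"
  unfolding in_Unminus_def Lset_def by (rule refl)

lemma in_Unminus_finsupp: "in_Unminus p \<Longrightarrow> finsupp p" by (simp add: in_Unminus_alt)
lemma in_Unminus_Rel: "in_Unminus p \<Longrightarrow> Rel p p" by (simp add: in_Unminus_alt Rel_refl)

lemma in_Unminus_add: "in_Unminus p \<Longrightarrow> in_Unminus q \<Longrightarrow> in_Unminus (ncadd p q)"
proof -
  assume p: "in_Unminus p" and q: "in_Unminus q"
  have "set w \<subseteq> Lset" if nz: "ncadd p q w \<noteq> 0" for w
  proof (cases "p w = 0")
    case True then have "q w \<noteq> 0" using nz by (simp add: ncadd_def)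
    then show ?thesis using q unfolding in_Unminus_alt by blast
  next
    case False then show ?thesis using p unfolding in_Unminus_alt by blast
  qed
  moreover have "finsupp (ncadd p q)" using p q by (simp add: in_Unminus_alt finsupp_add)
  ultimately show ?thesis unfolding in_Unminus_alt by blast
qed

lemma in_Unminus_mul: "in_Unminus p \<Longrightarrow> in_Unminus q \<Longrightarrow> in_Unminus (ncmul p q)"
proof -
  assume p: "in_Unminus p" and q: "in_Unminus q"
  have "set w \<subseteq> Lset" if nz: "ncmul p q w \<noteq> 0" for w
  proof -
    obtain i where "p (take i w) \<noteq> 0" "q (drop i w) \<noteq> 0" using ncmul_support[OF nz] by blast
    then have "set (take i w) \<subseteq> Lset"
      "set (drop i w) \<subseteq> Lset"
      using p q unfolding in_Unminus_alt by blast+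
    moreover have "set w = set (take i w) \<union> set (drop i w)"
      by (metis append_take_drop_id set_append)
    ultimately show ?thesis by blast
  qed
  then show ?thesis using p q finsupp_ncmul unfolding in_Unminus_alt by blast
qed

lemma in_Unminus_cst: "in_Unminus (ncscale c (ncword []))"
proof -
  have "finsupp (ncscale c (ncword []))" unfolding ncscale_def by (rule finsupp_scale[OF finsupp_ncword])
  moreover have "ncscale c (ncword []) w \<noteq> 0 \<Longrightarrow> w = []" for w by (simp add: ncscale_def ncword_def split: if_splits)
  ultimately show ?thesis unfolding in_Unminus_alt by fastforce
qed

lemma in_Unminus_letter: "in_Unminus (ncword [(xminus \<alpha>, 0)])"
proof -
  have "ncword [(xminus \<alpha>, 0)] w \<noteq> 0 \<Longrightarrow> w = [(xminus \<alpha>, 0)]" for w by (simp add: ncword_def split: if_splits)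
  moreover have "(xminus \<alpha>, 0) \<in> Lset"
    unfolding Lset_def by (cases \<alpha>) simp_all
  ultimately show ?thesis unfolding in_Unminus_alt using finsupp_ncword by fastforce
qed

lemma NU_add: "x \<in> NU \<Longrightarrow> y \<in> NU \<Longrightarrow> x + y \<in> NU"
proof -
  assume "x \<in> NU" "y \<in> NU"
  then obtain p q where pq: "in_Unminus p" "x = abs_U p" "in_Unminus q" "y = abs_U q" unfolding NU_def by blast
  then have "x + y = abs_U (ncadd p q)" using plus_U.abs_eq[OF in_Unminus_Rel in_Unminus_Rel] by simp
  then show ?thesis unfolding NU_def using in_Unminus_add[OF pq(1,3)] by blast
qed

lemma NU_mul: "x \<in> NU \<Longrightarrow> y \<in> NU \<Longrightarrow> x * y \<in> NU"
proof -
  assume "x \<in> NU" "y \<in> NU"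
  then obtain p q where pq: "in_Unminus p" "x = abs_U p" "in_Unminus q" "y = abs_U q" unfolding NU_def by blast
  then have "x * y = abs_U (ncmul p q)" using times_U.abs_eq[OF in_Unminus_Rel in_Unminus_Rel] by simp
  then show ?thesis unfolding NU_def using in_Unminus_mul[OF pq(1,3)] by blast
qed

lemma NU_cst: "cst c \<in> NU"
  unfolding NU_def by (auto intro!: exI[of _ "ncscale c (ncword [])"] in_Unminus_cst cst.abs_eq)

lemma NU_letter: "Lt (xminus \<alpha>) 0 \<in> NU"
  unfolding NU_def by (auto intro!: exI[of _ "ncword [(xminus \<alpha>, 0)]"] in_Unminus_letter Lt.abs_eq)

lemma NU_zero: "0 \<in> NU" using NU_cst[of 0] by (simp add: cst_zero)

lemma Lo_add: "x \<in> Lo s0 \<Longrightarrow> y \<in> Lo s0 \<Longrightarrow> x + y \<in> Lo s0"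
  unfolding Lo_def by (rule spanL_add)

lemma Lo_zero: "0 \<in> Lo s0" unfolding Lo_def by (rule spanL.zero)

lemma Lo_lmul: "n \<in> NU \<Longrightarrow> x \<in> Lo s0 \<Longrightarrow> n * x \<in> Lo s0"
  unfolding Lo_def
proof -
  assume n: "n \<in> NU" and x: "x \<in> spanL NU {XU s' |s'. succ_ord s0 s'}"
  from x show "n * x \<in> spanL NU {XU s' |s'. succ_ord s0 s'}"
  proof (induction rule: spanL.induct)
    case zero then show ?case by (simp add: spanL.zero)
  next
    case (step s g x)
    have "n * (s * g + x) = (n * s) * g + n * x" by (simp add: distrib_left mult.assoc)
    then show ?case using step n by (simp add: spanL.step NU_mul)
  qed
qed

lemma fact_prod_nz: "(of_nat (fact a * fact b * fact c) :: complex) \<noteq> 0"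
  by (simp only: of_nat_eq_0_iff) simp

lemma Lo_gen: "succ_ord s0 (a, b, c) \<Longrightarrow> n \<in> NU \<Longrightarrow> n * (Gm ^ a * Zm ^ b * Ym ^ c) \<in> Lo s0"
proof -
  assume s: "succ_ord s0 (a, b, c)" and n: "n \<in> NU"
  define K :: complex where "K = of_nat (fact a * fact b * fact c)"
  have K: "K \<noteq> 0" unfolding K_def by (rule fact_prod_nz)
  have "cst K * XU (a, b, c) = (cst K * cst (1 / K)) * (Gm ^ a * Zm ^ b * Ym ^ c)"
    unfolding XU_def K_def by (simp add: mult.assoc)
  also have "cst K * cst (1 / K) = 1" using K by (simp add: cst_mult[symmetric] cst_one)
  finally have e: "n * (Gm ^ a * Zm ^ b * Ym ^ c) = (n * cst K) * XU (a, b, c)" by (simp add: mult.assoc)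
  have "(n * cst K) * XU (a, b, c) \<in> Lo s0"
    unfolding Lo_def by (rule spanL_gen) (use s n NU_mul NU_cst in blast)+
  then show ?thesis using e by simp
qed

lemma LoA_add: "x \<in> LoA lam mu s0 \<Longrightarrow> y \<in> LoA lam mu s0 \<Longrightarrow> x + y \<in> LoA lam mu s0"
proof -
  assume "x \<in> LoA lam mu s0" "y \<in> LoA lam mu s0"
  then obtain l1 l2 where l: "l1 \<in> Lo s0" "inAnn lam mu (x - l1)" "l2 \<in> Lo s0" "inAnn lam mu (y - l2)"
    unfolding LoA_def by blast
  have eq: "x + y - (l1 + l2) = (x - l1) + (y - l2)" by (simp add: algebra_simps)
  have "inAnn lam mu (x + y - (l1 + l2))" unfolding eq by (rule inAnn_add[OF l(2) l(4)])
  then show ?thesis unfolding LoA_def using Lo_add[OF l(1) l(3)] by blast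
qed

lemma LoA_zero: "0 \<in> LoA lam mu s0"
proof -
  have "inAnn lam mu (0 - 0)" using inAnn_zero by simp
  then show ?thesis unfolding LoA_def using Lo_zero by blast
qed

lemma LoA_lmul: "n \<in> NU \<Longrightarrow> x \<in> LoA lam mu s0 \<Longrightarrow> n * x \<in> LoA lam mu s0"
proof -
  assume n: "n \<in> NU" and "x \<in> LoA lam mu s0"
  then obtain l where l: "l \<in> Lo s0" "inAnn lam mu (x - l)" unfolding LoA_def by blast
  have "n * x - n * l = n * (x - l)" by (simp add: algebra_simps)
  then have "inAnn lam mu (n * x - n * l)" using inAnn_lmul[OF l(2)] by simp
  then show ?thesis unfolding LoA_def using Lo_lmul[OF n l(1)] by blast
qed

lemma LoA_eqv: "inAnn lam mu (x - y) \<Longrightarrow> y \<in> LoA lam mu s0 \<Longrightarrow> x \<in> LoA lam mu s0"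
proof -
  assume a: "inAnn lam mu (x - y)" and "y \<in> LoA lam mu s0"
  then obtain l where l: "l \<in> Lo s0" "inAnn lam mu (y - l)" unfolding LoA_def by blast
  have "inAnn lam mu (x - l)" by (rule inAnn_eqv_trans[OF a l(2)])
  then show ?thesis unfolding LoA_def using l(1) by blast
qed

lemma LoA_gen: "succ_ord s0 (a, b, c) \<Longrightarrow> n \<in> NU \<Longrightarrow> n * (Gm ^ a * Zm ^ b * Ym ^ c) \<in> LoA lam mu s0"
proof -
  assume a: "succ_ord s0 (a, b, c)" "n \<in> NU"
  have "inAnn lam mu (n * (Gm ^ a * Zm ^ b * Ym ^ c) - n * (Gm ^ a * Zm ^ b * Ym ^ c))" using inAnn_zero by simp
  then show ?thesis unfolding LoA_def using Lo_gen[OF a] by blast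
qed

lemma XU_simp: "XU (a, b, c) = cst (1 / of_nat (fact a * fact b * fact c)) * (Gm ^ a * Zm ^ b * Ym ^ c)"
  by (simp add: XU_def)

lemma final_step:
  assumes x: "inAnn lam mu (cst k * (Gm ^ a * Zm ^ b * Ym ^ c) + l')" and l': "l' \<in> LoA lam mu (a, b, c)"
    and k: "k \<noteq> 0"
  shows "Pgoal lam mu (a, b, c)"
proof -
  obtain l where l: "l \<in> Lo (a, b, c)" "inAnn lam mu (l' - l)" using l' unfolding LoA_def by blast
  define K :: complex where "K = 1 / (k * of_nat (fact a * fact b * fact c))"
  have KK: "K * k = 1 / of_nat (fact a * fact b * fact c)"
    unfolding K_def using k fact_prod_nz[of a b c] by (simp add: field_simps)
  have e1: "cst K * (cst k * (Gm ^ a * Zm ^ b * Ym ^ c) + l') = (cst K * cst k) * (Gm ^ a * Zm ^ b * Ym ^ c) + cst K * l'"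
    by (simp only: distrib_left mult.assoc)
  have e2: "cst K * cst k = cst (1 / of_nat (fact a * fact b * fact c))" by (simp only: cst_mult[symmetric] KK)
  have e3: "cst K * l' = cst K * l + cst K * (l' - l)" by (simp add: algebra_simps)
  have e: "cst K * (cst k * (Gm ^ a * Zm ^ b * Ym ^ c) + l') = (XU (a, b, c) + cst K * l) + cst K * (l' - l)"
    unfolding e1 e2 e3 XU_simp by (simp only: add.assoc)
  have "inAnn lam mu ((XU (a, b, c) + cst K * l) + cst K * (l' - l))"
    using inAnn_lmul[OF x, where y="cst K"] unfolding e .
  from inAnn_diff[OF this inAnn_lmul[OF l(2), where y="cst K"]]
  have "inAnn lam mu (XU (a, b, c) + cst K * l)" by simp
  moreover have "cst K * l \<in> Lo (a, b, c)" by (rule Lo_lmul[OF NU_cst l(1)])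
  ultimately show ?thesis unfolding Pgoal_def by blast
qed


lemma Xs_Rel: "Rel (Xs s) (Xs s)"
proof -
  obtain a b c where s: "s = (a, b, c)" by (cases s) auto
  show ?thesis unfolding Xs_def s prod.case ncscale_def
    by (rule Rel_refl, rule finsupp_scale[OF finsupp_ncword])
qed

lemma abs_Xs: "abs_U (Xs s) = XU s"
proof -
  obtain a b c where s: "s = (a, b, c)" by (cases s) auto
  define w :: "letter list" where "w = replicate a (xminus R10, 1) @ replicate b (xminus R11, 1) @ replicate c (xminus R01, 1)"
  define k :: complex where "k = 1 / of_nat (fact a * fact b * fact c)"
  have "Xs s = ncmul (ncscale k (ncword [])) (ncword w)"
    unfolding Xs_def s w_def k_def ncmul_cst_left by simp
  then have "abs_U (Xs s) = cst k * Wd w"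
    using times_U.abs_eq[OF Rel_refl Rel_refl, of "ncscale k (ncword [])" "ncword w"]
    by (simp add: cst.abs_eq Wd.abs_eq ncscale_def finsupp_scale finsupp_ncword)
  also have "Wd w = Gm ^ a * Zm ^ b * Ym ^ c"
    unfolding w_def by (simp add: Wd_append Wd_replicate mult.assoc)
  finally show ?thesis unfolding s k_def XU_simp .
qed

definition SUMF :: "(nat \<times> nat \<times> nat) set \<Rightarrow> (nat \<times> nat \<times> nat \<Rightarrow> ncpoly) \<Rightarrow> ncpoly" where
  "SUMF T c = (\<lambda>w. \<Sum>t\<in>T. ncmul (c t) (Xs t) w)"

lemma SUMF_abs:
  assumes "finite T" "\<forall>t\<in>T. finsupp (c t)"
  shows "Rel (SUMF T c) (SUMF T c) \<and> abs_U (SUMF T c) = (\<Sum>t\<in>T. abs_U (c t) * XU t)"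
  using assms
proof (induction T rule: finite_induct)
  case empty
  have "SUMF {} c = (\<lambda>w. 0)" by (simp add: SUMF_def)
  then show ?case using zero_U.abs_eq by (simp add: Rel_refl finsupp_zero)
next
  case (insert t T)
  have e: "SUMF (insert t T) c = ncadd (ncmul (c t) (Xs t)) (SUMF T c)"
    using insert by (simp add: SUMF_def ncadd_def fun_eq_iff)
  have fX: "finsupp (Xs t)" using Xs_Rel[of t] by (simp add: Rel_def)
  have fc: "finsupp (c t)" using insert by simp
  have r1: "Rel (ncmul (c t) (Xs t)) (ncmul (c t) (Xs t))"
    by (rule Rel_refl[OF finsupp_ncmul[OF fc fX]])
  have r2: "Rel (SUMF T c) (SUMF T c)" using insert by simp
  have ct: "Rel (c t) (c t)" using insert by (simp add: Rel_refl)
  have "Rel (SUMF (insert t T) c) (SUMF (insert t T) c)"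
    unfolding e using r1 r2 by (intro Rel_refl finsupp_add) (simp_all add: Rel_def)
  moreover have "abs_U (SUMF (insert t T) c) = abs_U (c t) * XU t + abs_U (SUMF T c)"
    unfolding e plus_U.abs_eq[OF r1 r2, symmetric] times_U.abs_eq[OF ct Xs_Rel, symmetric] abs_Xs ..
  ultimately show ?case using insert by simp
qed

lemma Lo_to_sum:
  "x \<in> Lo s0 \<Longrightarrow> \<exists>T cU. finite T \<and> (\<forall>t\<in>T. succ_ord s0 t \<and> cU t \<in> NU) \<and> x = (\<Sum>t\<in>T. cU t * XU t)"
  unfolding Lo_def
proof (induction rule: spanL.induct)
  case zero
  show ?case by (rule exI[of _ "{}"]) simp
next
  case (step s g x)
  then obtain T cU where T: "finite T" "\<forall>t\<in>T. succ_ord s0 t \<and> cU t \<in> NU" "x = (\<Sum>t\<in>T. cU t * XU t)"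
    by blast
  from step obtain s' where s': "g = XU s'" "succ_ord s0 s'" by blast
  show ?case
  proof (cases "s' \<in> T")
    case True
    define cU' where "cU' = cU(s' := s + cU s')"
    have "(\<Sum>t\<in>T. cU' t * XU t) = cU' s' * XU s' + (\<Sum>t\<in>T - {s'}. cU' t * XU t)"
      using True T(1) by (simp add: sum.remove)
    also have "(\<Sum>t\<in>T - {s'}. cU' t * XU t) = (\<Sum>t\<in>T - {s'}. cU t * XU t)"
      unfolding cU'_def by (rule sum.cong) auto
    also have "cU' s' * XU s' = s * XU s' + cU s' * XU s'" unfolding cU'_def by (simp add: distrib_right)
    finally have "(\<Sum>t\<in>T. cU' t * XU t) = s * g + x"
      using True T(1) s'(1) by (simp add: T(3) sum.remove add.assoc)
    moreover have "\<forall>t\<in>T. succ_ord s0 t \<and> cU' t \<in> NU"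
      using T(2) step(1) unfolding cU'_def by (auto intro: NU_add)
    ultimately show ?thesis using T(1) by metis
  next
    case False
    define cU' where "cU' = cU(s' := s)"
    have "(\<Sum>t\<in>insert s' T. cU' t * XU t) = cU' s' * XU s' + (\<Sum>t\<in>T. cU' t * XU t)"
      using False T(1) by simp
    also have "(\<Sum>t\<in>T. cU' t * XU t) = (\<Sum>t\<in>T. cU t * XU t)"
      unfolding cU'_def using False by (intro sum.cong) auto
    finally have "(\<Sum>t\<in>insert s' T. cU' t * XU t) = s * g + x" using s'(1) T(3) by (simp add: cU'_def)
    moreover have "\<forall>t\<in>insert s' T. succ_ord s0 t \<and> cU' t \<in> NU"
      using T(2) step(1) s'(2) unfolding cU'_def by auto
    moreover have "finite (insert s' T)" using T(1) by simp
    ultimately show ?thesis by metis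
  qed
qed

lemma from_Pgoal:
  assumes "Pgoal lam mu s"
  shows "\<exists>T :: (nat \<times> nat \<times> nat) set. \<exists>c :: nat \<times> nat \<times> nat \<Rightarrow> ncpoly.
           finite T \<and> (\<forall>s'\<in>T. succ_ord s s' \<and> in_Unminus (c s')) \<and>
           (\<lambda>w. Xs s w + (\<Sum>s'\<in>T. ncmul (c s') (Xs s') w)) \<in> ann_F lam mu"
proof -
  obtain l where l: "l \<in> Lo s" "inAnn lam mu (XU s + l)" using assms unfolding Pgoal_def by blast
  obtain T cU where T: "finite T" "\<forall>t\<in>T. succ_ord s t \<and> cU t \<in> NU" "l = (\<Sum>t\<in>T. cU t * XU t)"
    using Lo_to_sum[OF l(1)] by blast
  define c where "c t = (SOME p. in_Unminus p \<and> cU t = abs_U p)" for t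
  have c: "in_Unminus (c t) \<and> cU t = abs_U (c t)" if "t \<in> T" for t
  proof -
    have "\<exists>p. in_Unminus p \<and> cU t = abs_U p" using T(2) that unfolding NU_def by blast
    then show ?thesis unfolding c_def by (rule someI_ex)
  qed
  have fc: "\<forall>t\<in>T. finsupp (c t)" using c in_Unminus_finsupp by blast
  from SUMF_abs[OF T(1) fc] have S: "Rel (SUMF T c) (SUMF T c)" "abs_U (SUMF T c) = (\<Sum>t\<in>T. abs_U (c t) * XU t)"
    by auto
  have "(\<Sum>t\<in>T. abs_U (c t) * XU t) = l" unfolding T(3) using c by (intro sum.cong) auto
  define y where "y = (\<lambda>w. Xs s w + (\<Sum>s'\<in>T. ncmul (c s') (Xs s') w))"
  have ye: "y = ncadd (Xs s) (SUMF T c)" unfolding y_def SUMF_def ncadd_def ..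
  have ry: "Rel y y" unfolding ye using Xs_Rel[of s] S(1) by (intro Rel_refl finsupp_add) (simp_all add: Rel_def)
  have "abs_U y = XU s + l"
    unfolding ye plus_U.abs_eq[OF Xs_Rel S(1), symmetric] abs_Xs S(2) \<open>(\<Sum>t\<in>T. abs_U (c t) * XU t) = l\<close> ..
  then have "y \<in> ann_F lam mu" using l(2) inAnn.abs_eq[OF ry] by simp
  then show ?thesis unfolding y_def using T(1,2) c by blast
qed


declare One_nat_def [simp del]

lemma Lt_negR: "Lt ((-1::real) *\<^sub>R A) r = - Lt A r"
  by (simp add: Lt_neg)

lemma zero_case: "inAnn lam mu (Gm ^ a * Zm ^ b * Ym ^ c) \<Longrightarrow> Pgoal lam mu (a, b, c)"
  by (rule final_step[where k=1 and l'=0]) (simp_all add: cst_one LoA_zero)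

lemma pow_split: "k \<le> n \<Longrightarrow> (x::U) ^ n = x ^ (n - k) * x ^ k"
  by (simp add: power_add[symmetric])

lemma case_c:
  assumes "min m2 n2 < c"
  shows "Pgoal (m1, m2) (n1, n2) (a, b, c)"
proof (rule zero_case)
  have A: "inAnn (m1, m2) (n1, n2) (Ym ^ (min m2 n2 + 1))"
    using ann_pow1[of "(m1, m2)" "(n1, n2)" R01] by simp
  have "Gm ^ a * Zm ^ b * Ym ^ c = (Gm ^ a * Zm ^ b * Ym ^ (c - (min m2 n2 + 1))) * Ym ^ (min m2 n2 + 1)"
    using assms by (simp only: mult.assoc pow_split[of "min m2 n2 + 1" c Ym])
  then show "inAnn (m1, m2) (n1, n2) (Gm ^ a * Zm ^ b * Ym ^ c)" using inAnn_lmul[OF A] by simp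
qed

lemma GY: "Gm * Ym = Ym * Gm + (- Lt E31 2)"
  by (subst Lt_bracket) (simp only: br2 Lt_negR one_add_one)
lemma GZ: "Gm * Zm = Zm * Gm" by (rule Lt_commute[OF br1])
lemma W_G: "(- Lt E31 2) * Gm = Gm * (- Lt E31 2)" using Lt_commute[OF br4, of 2 1] by simp
lemma W_Y: "(- Lt E31 2) * Ym = Ym * (- Lt E31 2)" using Lt_commute[OF br3, of 2 1] by simp
lemma ann_W: "inAnn lam mu (- Lt E31 2)"
  using inAnn_neg[OF ann_high[of 2 lam mu R11]] by simp

lemma case_a:
  assumes "min m1 n1 < a"
  shows "Pgoal (m1, m2) (n1, n2) (a, b, c)"
proof (rule zero_case)
  let ?lam = "(m1, m2)" and ?mu = "(n1, n2)"
  have A: "inAnn ?lam ?mu (Gm ^ (min m1 n1 + 1))"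
    using ann_pow1[of ?lam ?mu R10] by simp
  have Ga: "inAnn ?lam ?mu (Gm ^ a)"
    using inAnn_lmul[OF A, where y="Gm ^ (a - (min m1 n1 + 1))"] pow_split[of "min m1 n1 + 1" a Gm] assms
    by simp
  obtain S where S: "Gm ^ a * Ym ^ c = Ym ^ c * Gm ^ a + S * (- Lt E31 2)"
    using G2[OF GY W_G W_Y] by blast
  have "Gm ^ a * Zm ^ b * Ym ^ c = Zm ^ b * (Gm ^ a * Ym ^ c)"
    by (simp add: comm_pow2[OF GZ] mult.assoc[symmetric])
  also have "\<dots> = (Zm ^ b * Ym ^ c) * Gm ^ a + (Zm ^ b * S) * (- Lt E31 2)"
    by (simp only: S distrib_left mult.assoc)
  finally show "inAnn ?lam ?mu (Gm ^ a * Zm ^ b * Ym ^ c)"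
    using inAnn_add[OF inAnn_lmul[OF Ga] inAnn_lmul[OF ann_W]] by simp
qed

lemma br19: "lie_br E32 E12 = 0" by (simp add: msimps)
lemma br20: "lie_br E21 E23 = 0" by (simp add: msimps)

lemma neg_pow: "(- (x::U)) ^ n = cst ((-1) ^ n) * x ^ n"
proof (induction n)
  case 0 then show ?case by (simp add: cst_one)
next
  case (Suc n)
  have "(- x) ^ Suc n = - (x * (cst ((-1) ^ n) * x ^ n))" by (simp add: Suc)
  also have "\<dots> = - (cst ((-1) ^ n) * (x * x ^ n))" by (simp only: mult_cst_left)
  also have "\<dots> = cst ((-1) ^ Suc n) * x ^ Suc n" by (simp add: cst_neg)
  finally show ?case .
qed

abbreviation "Pm \<equiv> Lt E12 0"
abbreviation "Qm \<equiv> Lt E23 0"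

lemma PZ: "Pm * Zm = Zm * Pm + (- Ym)"
  by (subst Lt_bracket) (simp only: br6 Lt_negR add_0)
lemma YP: "(- Ym) * Pm = Pm * (- Ym)" using Lt_commute[OF br19, of 1 0] by simp
lemma YZ: "(- Ym) * Zm = Zm * (- Ym)" using Lt_commute[OF br8, of 1 1] by simp
lemma QZ: "Qm * Zm = Zm * Qm + Gm"
  by (subst Lt_bracket) (simp only: br9 add_0)
lemma GQ: "Gm * Qm = Qm * Gm" using Lt_commute[OF br20, of 1 0] by simp
lemma QY: "Qm * Ym = Ym * Qm + Lt h2 1"
  by (subst Lt_bracket) (simp only: br11 add_0)
lemma H2Y: "Lt h2 1 * Ym = Ym * Lt h2 1 + (- cst 2 * Lt E32 2)"
  by (subst Lt_bracket) (simp only: br12 Lt_m2 one_add_one)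

lemma ann_QY: "inAnn lam mu (Qm * Ym ^ c)"
proof -
  have aP: "inAnn lam mu Qm" using ann_xplus[of lam mu R01 0] by simp
  have aH: "inAnn lam mu (Lt h2 1)" by (rule ann_h2) simp
  have aY2: "inAnn lam mu (Lt E32 2)" using ann_high[of 2 lam mu R01] by simp
  have c1: "Lt E32 2 * Ym = Ym * Lt E32 2" using Lt_commute[OF br13, of 2 1] by simp
  have "inAnn lam mu ((- cst 2 * Lt E32 2) * Ym ^ j)" for j
  proof -
    have eq: "(- cst 2 * Lt E32 2) * Ym ^ j = (- cst 2 * Ym ^ j) * Lt E32 2"
      by (simp only: mult.assoc comm_pow[OF c1])
    show ?thesis unfolding eq by (rule inAnn_lmul[OF aY2])
  qed
  then have "inAnn lam mu (Lt h2 1 * Ym ^ j)" for j by (rule G4[OF H2Y aH])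
  then show ?thesis by (rule G4[OF QY aP])
qed

lemma case_abc:
  assumes "min (m1 + m2) (n1 + n2) < a + b + c"
  shows "Pgoal (m1, m2) (n1, n2) (a, b, c)"
proof (rule zero_case)
  let ?lam = "(m1, m2)" and ?mu = "(n1, n2)"
  define N where "N = a + b + c"
  have A: "inAnn ?lam ?mu (Zm ^ (min (m1 + m2) (n1 + n2) + 1))"
    using ann_pow1[of ?lam ?mu R11] by simp
  have ZN: "inAnn ?lam ?mu (Zm ^ N)"
    using inAnn_lmul[OF A, where y="Zm ^ (N - (min (m1 + m2) (n1 + n2) + 1))"]
      pow_split[of "min (m1 + m2) (n1 + n2) + 1" N Zm] assms unfolding N_def by simp
  have aP: "inAnn ?lam ?mu Pm" using ann_xplus[of ?lam ?mu R10 0] by simp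
  have h1: "inAnn ?lam ?mu (Pm * (- Ym) ^ i * 1)" for i
    using inAnn_lmul[OF aP, where y="(- Ym) ^ i"] by (simp add: comm_pow[OF YP[symmetric]])
  have s1: "inAnn ?lam ?mu (Pm ^ c * Zm ^ N * 1 - cst (ffc N c) * Zm ^ (N - c) * (- Ym) ^ c * 1)"
    by (rule G3[OF PZ YP YZ h1]) (simp add: N_def)
  have s1': "inAnn ?lam ?mu (cst (ffc N c) * Zm ^ (N - c) * (- Ym) ^ c)"
    using inAnn_diff[OF inAnn_lmul[OF ZN, where y="Pm ^ c"] s1] by simp
  have eq1: "Qm ^ a * (cst (ffc N c) * Zm ^ (N - c) * (- Ym) ^ c) = cst (ffc N c * (-1) ^ c) * (Qm ^ a * Zm ^ (N - c) * Ym ^ c)"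
  proof -
    have "cst (ffc N c) * Zm ^ (N - c) * (- Ym) ^ c = cst (ffc N c) * (Zm ^ (N - c) * (cst ((-1) ^ c) * Ym ^ c))"
      by (simp only: neg_pow mult.assoc)
    also have "\<dots> = (cst (ffc N c) * cst ((-1) ^ c)) * (Zm ^ (N - c) * Ym ^ c)"
      by (simp only: mult_cst_left[of "Zm ^ (N - c)"] mult.assoc)
    finally have "Qm ^ a * (cst (ffc N c) * Zm ^ (N - c) * (- Ym) ^ c) = Qm ^ a * (cst (ffc N c * (-1) ^ c) * (Zm ^ (N - c) * Ym ^ c))"
      by (simp only: cst_mult)
    also have "\<dots> = cst (ffc N c * (-1) ^ c) * (Qm ^ a * Zm ^ (N - c) * Ym ^ c)"
      by (simp only: mult_cst_left[of "Qm ^ a"] mult.assoc)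
    finally show ?thesis .
  qed
  have t1: "inAnn ?lam ?mu (Qm ^ a * Zm ^ (N - c) * Ym ^ c)"
    using inAnn_lmul[OF s1', where y="Qm ^ a"] unfolding eq1
    by (rule inAnn_cancel[rotated]) (simp add: ffc_nz N_def)
  have h2: "inAnn ?lam ?mu (Qm * Gm ^ i * Ym ^ c)" for i
    using inAnn_lmul[OF ann_QY, where y="Gm ^ i"] by (simp add: comm_pow[OF GQ[symmetric]] mult.assoc)
  have s2: "inAnn ?lam ?mu (Qm ^ a * Zm ^ (N - c) * Ym ^ c - cst (ffc (N - c) a) * Zm ^ (N - c - a) * Gm ^ a * Ym ^ c)"
    by (rule G3[OF QZ GQ GZ h2]) (simp add: N_def)
  have "inAnn ?lam ?mu (cst (ffc (N - c) a) * (Zm ^ b * Gm ^ a * Ym ^ c))"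
    using inAnn_diff[OF t1 s2] by (simp add: N_def mult.assoc)
  then have "inAnn ?lam ?mu (Zm ^ b * Gm ^ a * Ym ^ c)"
    by (rule inAnn_cancel[rotated]) (simp add: ffc_nz N_def)
  then show "inAnn ?lam ?mu (Gm ^ a * Zm ^ b * Ym ^ c)"
    by (simp add: comm_pow2[OF GZ])
qed


declare One_nat_def [simp del]

lemma two_plus_one: "(2::nat) + 1 = 3" by simp

lemma RL: "inAnn lam mu (Zm ^ j * Ym ^ k * Gm ^ a - Gm ^ a * Zm ^ j * Ym ^ k)"
proof -
  have YG: "Ym * Gm = Gm * Ym + Lt E31 2"
    by (subst Lt_bracket) (simp only: br17 one_add_one)
  have WY: "Lt E31 2 * Ym = Ym * Lt E31 2" using Lt_commute[OF br3, of 2 1] by simp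
  have WG: "Lt E31 2 * Gm = Gm * Lt E31 2" using Lt_commute[OF br4, of 2 1] by simp
  obtain S where S: "Ym ^ k * Gm ^ a = Gm ^ a * Ym ^ k + S * Lt E31 2"
    using G2[OF YG WY WG] by blast
  have "Zm ^ j * Ym ^ k * Gm ^ a = Zm ^ j * (Gm ^ a * Ym ^ k) + (Zm ^ j * S) * Lt E31 2"
    by (simp only: mult.assoc S distrib_left)
  also have "Zm ^ j * (Gm ^ a * Ym ^ k) = Gm ^ a * Zm ^ j * Ym ^ k"
    by (simp only: mult.assoc[symmetric] comm_pow2[OF GZ[symmetric]])
  finally have "Zm ^ j * Ym ^ k * Gm ^ a - Gm ^ a * Zm ^ j * Ym ^ k = (Zm ^ j * S) * Lt E31 2" by simp
  moreover have "inAnn lam mu (Lt E31 2)" using ann_high[of 2 lam mu R11] by simp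
  ultimately show ?thesis using inAnn_lmul by metis
qed

lemma case_iv:
  assumes "m1 + n1 < 2 * a + b"
  shows "Pgoal (m1, m2) (n1, n2) (a, b, c)"
proof -
  let ?lam = "(m1, m2)" and ?mu = "(n1, n2)"
  let ?f = "Lt E21 0" and ?e = "Lt E12 1"
  have ef: "?e * ?f = ?f * ?e + Lt h1 1" by (subst Lt_bracket) (simp only: br14 add_0_right)
  have eG: "?e * Gm = Gm * ?e + Lt h1 2" by (subst Lt_bracket) (simp only: br14 one_add_one)
  have Hf: "Lt h1 1 * ?f = ?f * Lt h1 1 + (- cst 2 * Gm)" by (subst Lt_bracket) (simp only: br15 Lt_m2 add_0_right)
  have HG: "Lt h1 1 * Gm = Gm * Lt h1 1 + (- cst 2 * Lt E21 2)" by (subst Lt_bracket) (simp only: br15 Lt_m2 one_add_one)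
  have H'G: "Lt h1 2 * Gm = Gm * Lt h1 2 + (- cst 2 * Lt E21 3)" by (subst Lt_bracket) (simp only: br15 Lt_m2 two_plus_one)
  have fG: "?f * Gm = Gm * ?f" by (rule Lt_commute[OF br16])
  have G2G: "Lt E21 2 * Gm = Gm * Lt E21 2" by (rule Lt_commute[OF br16])
  have G3G: "Lt E21 3 * Gm = Gm * Lt E21 3" by (rule Lt_commute[OF br16])
  have Ae: "inAnn ?lam ?mu ?e" using ann_xplus[of ?lam ?mu R10 1] by simp
  have AH: "inAnn ?lam ?mu (Lt h1 1)" by (rule ann_h1) simp
  have AH': "inAnn ?lam ?mu (Lt h1 2)" by (rule ann_h1) simp
  have AG2: "inAnn ?lam ?mu (Lt E21 2)" using ann_high[of 2 ?lam ?mu R10] by simp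
  have AG3: "inAnn ?lam ?mu (Lt E21 3)" using ann_high[of 3 ?lam ?mu R10] by simp
  have Af: "inAnn ?lam ?mu (?f ^ (m1 + n1 + 1))" using ann_pow0[of ?lam ?mu R10] by simp
  have fb: "inAnn ?lam ?mu (?f ^ b * Gm ^ a)"
    by (rule GL[OF ef eG Hf HG H'G fG G2G G3G Ae AH AH' AG2 AG3 Af]) (use assms in simp)
  define n where "n = b + c"
  have Yf: "Ym * ?f = ?f * Ym + Zm" by (subst Lt_bracket) (simp only: br17 add_0_right)
  have Zf: "Zm * ?f = ?f * Zm" by (rule Lt_commute[OF br4])
  have ZY: "Zm * Ym = Ym * Zm" by (rule Lt_commute[OF br3])
  have Sf: "?f \<in> NU" using NU_letter[of R10] by simp
  have W: "Ym ^ n * ?f ^ b - cst (ffc n b) * (Zm ^ b * Ym ^ (n - b)) \<in> spanL NU {Zm ^ j * Ym ^ (n - j) | j. j < b}"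
    by (rule WL[OF Yf Zf ZY NU_mul Sf NU_cst])
  define \<sigma> where "\<sigma> = Ym ^ n * ?f ^ b - cst (ffc n b) * (Zm ^ b * Ym ^ (n - b))"
  have sig: "\<sigma> * Gm ^ a \<in> LoA ?lam ?mu (a, b, c)"
  proof (rule spanL_map[OF W[folded \<sigma>_def] LoA_zero LoA_add])
    fix s g assume s: "s \<in> NU" and "g \<in> {Zm ^ j * Ym ^ (n - j) | j. j < b}"
    then obtain j where j: "j < b" "g = Zm ^ j * Ym ^ (n - j)" by blast
    have "s * (Gm ^ a * Zm ^ j * Ym ^ (n - j)) \<in> LoA ?lam ?mu (a, b, c)"
      by (rule LoA_gen[OF _ s]) (use j(1) in \<open>simp add: succ_ord_def n_def\<close>)
    moreover have "inAnn ?lam ?mu (s * g * Gm ^ a - s * (Gm ^ a * Zm ^ j * Ym ^ (n - j)))"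
      using inAnn_lmul[OF RL, where y=s] unfolding j(2) by (simp add: mult.assoc right_diff_distrib)
    ultimately show "s * g * Gm ^ a \<in> LoA ?lam ?mu (a, b, c)" by (rule LoA_eqv[rotated])
  qed
  define M where "M = Gm ^ a * Zm ^ b * Ym ^ c"
  define l' where "l' = cst (ffc n b) * (Zm ^ b * Ym ^ c * Gm ^ a - M) + \<sigma> * Gm ^ a"
  have l': "l' \<in> LoA ?lam ?mu (a, b, c)"
  proof (rule LoA_eqv[OF _ sig])
    show "inAnn ?lam ?mu (l' - \<sigma> * Gm ^ a)"
      unfolding l'_def M_def using inAnn_lmul[OF RL[of _ _ b c a], where y="cst (ffc n b)"] by simp
  qed
  have "Ym ^ n * (?f ^ b * Gm ^ a) = cst (ffc n b) * M + l'"
    unfolding l'_def \<sigma>_def M_def n_def by (simp add: algebra_simps)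
  then have "inAnn ?lam ?mu (cst (ffc n b) * M + l')" using inAnn_lmul[OF fb, where y="Ym ^ n"] by simp
  then show ?thesis unfolding M_def by (rule final_step[OF _ l']) (simp add: ffc_nz n_def)
qed

lemma case_v:
  assumes "m2 + n2 < 2 * c + b"
  shows "Pgoal (m1, m2) (n1, n2) (a, b, c)"
proof -
  let ?lam = "(m1, m2)" and ?mu = "(n1, n2)"
  let ?f = "Lt E32 0" and ?e = "Lt E23 1"
  have ef: "?e * ?f = ?f * ?e + Lt h2 1" by (subst Lt_bracket) (simp only: br11 add_0_right)
  have eG: "?e * Ym = Ym * ?e + Lt h2 2" by (subst Lt_bracket) (simp only: br11 one_add_one)
  have Hf: "Lt h2 1 * ?f = ?f * Lt h2 1 + (- cst 2 * Ym)" by (subst Lt_bracket) (simp only: br12 Lt_m2 add_0_right)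
  have HG: "Lt h2 1 * Ym = Ym * Lt h2 1 + (- cst 2 * Lt E32 2)" by (subst Lt_bracket) (simp only: br12 Lt_m2 one_add_one)
  have H'G: "Lt h2 2 * Ym = Ym * Lt h2 2 + (- cst 2 * Lt E32 3)" by (subst Lt_bracket) (simp only: br12 Lt_m2 two_plus_one)
  have fG: "?f * Ym = Ym * ?f" by (rule Lt_commute[OF br13])
  have G2G: "Lt E32 2 * Ym = Ym * Lt E32 2" by (rule Lt_commute[OF br13])
  have G3G: "Lt E32 3 * Ym = Ym * Lt E32 3" by (rule Lt_commute[OF br13])
  have Ae: "inAnn ?lam ?mu ?e" using ann_xplus[of ?lam ?mu R01 1] by simp
  have AH: "inAnn ?lam ?mu (Lt h2 1)" by (rule ann_h2) simp
  have AH': "inAnn ?lam ?mu (Lt h2 2)" by (rule ann_h2) simp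
  have AG2: "inAnn ?lam ?mu (Lt E32 2)" using ann_high[of 2 ?lam ?mu R01] by simp
  have AG3: "inAnn ?lam ?mu (Lt E32 3)" using ann_high[of 3 ?lam ?mu R01] by simp
  have Af: "inAnn ?lam ?mu (?f ^ (m2 + n2 + 1))" using ann_pow0[of ?lam ?mu R01] by simp
  have fb: "inAnn ?lam ?mu (?f ^ b * Ym ^ c)"
    by (rule GL[OF ef eG Hf HG H'G fG G2G G3G Ae AH AH' AG2 AG3 Af]) (use assms in simp)
  define n where "n = a + b"
  have Yf: "Gm * ?f = ?f * Gm + (- Zm)" by (subst Lt_bracket) (simp only: br2 Lt_negR add_0_right)
  have Zf: "(- Zm) * ?f = ?f * (- Zm)" using Lt_commute[OF br3, of 1 0] by simp
  have ZY: "(- Zm) * Gm = Gm * (- Zm)" using Lt_commute[OF br4, of 1 1] by simp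
  have Sf: "?f \<in> NU" using NU_letter[of R01] by simp
  have W: "Gm ^ n * ?f ^ b - cst (ffc n b) * ((- Zm) ^ b * Gm ^ (n - b)) \<in> spanL NU {(- Zm) ^ j * Gm ^ (n - j) | j. j < b}"
    by (rule WL[OF Yf Zf ZY NU_mul Sf NU_cst])
  define \<sigma> where "\<sigma> = Gm ^ n * ?f ^ b - cst (ffc n b) * ((- Zm) ^ b * Gm ^ (n - b))"
  have sig: "\<sigma> * Ym ^ c \<in> LoA ?lam ?mu (a, b, c)"
  proof (rule spanL_map[OF W[folded \<sigma>_def] LoA_zero LoA_add])
    fix s g assume s: "s \<in> NU" and "g \<in> {(- Zm) ^ j * Gm ^ (n - j) | j. j < b}"
    then obtain j where j: "j < b" "g = (- Zm) ^ j * Gm ^ (n - j)" by blast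
    have "(s * cst ((-1) ^ j)) * (Gm ^ (n - j) * Zm ^ j * Ym ^ c) \<in> LoA ?lam ?mu (a, b, c)"
      by (rule LoA_gen[OF _ NU_mul[OF s NU_cst]]) (use j(1) in \<open>simp add: succ_ord_def n_def\<close>)
    moreover have "s * g * Ym ^ c = (s * cst ((-1) ^ j)) * (Gm ^ (n - j) * Zm ^ j * Ym ^ c)"
      unfolding j(2) neg_pow by (simp only: mult.assoc comm_pow2[OF GZ])
    ultimately show "s * g * Ym ^ c \<in> LoA ?lam ?mu (a, b, c)" by simp
  qed
  define M where "M = Gm ^ a * Zm ^ b * Ym ^ c"
  have top: "cst (ffc n b) * ((- Zm) ^ b * Gm ^ (n - b)) * Ym ^ c = cst (ffc n b * (-1) ^ b) * M"
  proof -
    have "cst (ffc n b) * ((- Zm) ^ b * Gm ^ (n - b)) * Ym ^ c = cst (ffc n b) * (cst ((-1) ^ b) * (Zm ^ b * Gm ^ a * Ym ^ c))"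
      unfolding neg_pow n_def by (simp add: mult.assoc)
    also have "\<dots> = cst (ffc n b * (-1) ^ b) * M"
      unfolding M_def by (simp only: cst_mult mult.assoc comm_pow2[OF GZ])
    finally show ?thesis .
  qed
  have "Gm ^ n * (?f ^ b * Ym ^ c) = cst (ffc n b * (-1) ^ b) * M + \<sigma> * Ym ^ c"
    unfolding \<sigma>_def top[symmetric] by (simp add: algebra_simps)
  then have "inAnn ?lam ?mu (cst (ffc n b * (-1) ^ b) * M + \<sigma> * Ym ^ c)"
    using inAnn_lmul[OF fb, where y="Gm ^ n"] by simp
  then show ?thesis unfolding M_def by (rule final_step[OF _ sig]) (simp add: ffc_nz n_def)
qed


lemma main_U:
  assumes "s \<notin> S_A lam mu"
  shows "Pgoal lam mu s"
proof -
  obtain m1 m2 where lam: "lam = (m1, m2)" by (cases lam) auto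
  obtain n1 n2 where mu: "mu = (n1, n2)" by (cases mu) auto
  obtain a b c where s: "s = (a, b, c)" by (cases s) auto
  have "\<not> (a \<le> min m1 n1 \<and> c \<le> min m2 n2 \<and> a + b + c \<le> min (m1 + m2) (n1 + n2)
        \<and> 2 * a + b \<le> m1 + n1 \<and> 2 * c + b \<le> m2 + n2)"
    using assms unfolding lam mu s S_A_def by simp
  then consider "min m1 n1 < a" | "min m2 n2 < c" | "min (m1 + m2) (n1 + n2) < a + b + c"
    | "m1 + n1 < 2 * a + b" | "m2 + n2 < 2 * c + b" by linarith
  then have "Pgoal (m1, m2) (n1, n2) (a, b, c)"
  proof cases
    case 1 then show ?thesis by (rule case_a)
  next
    case 2 then show ?thesis by (rule case_c)
  next
    case 3 then show ?thesis by (rule case_abc)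
  next
    case 4 then show ?thesis by (rule case_iv)
  next
    case 5 then show ?thesis by (rule case_v)
  qed
  then show ?thesis unfolding lam mu s .
qed

theorem proposition4p1:
  fixes lam mu :: "nat \<times> nat" and s :: "nat \<times> nat \<times> nat"
  assumes "s \<notin> S_A lam mu"
  shows "\<exists>T :: (nat \<times> nat \<times> nat) set. \<exists>c :: nat \<times> nat \<times> nat \<Rightarrow> ncpoly.
           finite T \<and> (\<forall>s'\<in>T. succ_ord s s' \<and> in_Unminus (c s')) \<and>
           (\<lambda>w. Xs s w + (\<Sum>s'\<in>T. ncmul (c s') (Xs s') w)) \<in> ann_F lam mu"
  by (rule from_Pgoal[OF main_U[OF assms]])


end
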